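(* Let $R$ be a (not necessarily discrete) $\Gamma$-ring, and for each $n\ge0$ let $R_n$ be the discrete $\Gamma$-ring formed by the $n$-simplices, $R_n(K)=R(K)_n$. Let $FDL(R)_\ast$ be the simplicial set whose $n$-simplices are the formal difference laws in $R_n$, and $\Gamma(H\mathbb Z,R)_\ast$ the simplicial set whose $n$-simplices are the multiplicative maps $H\mathbb Z\to R_n$ (simplicial structure induced from that of $R$). Then the maps $\phi\mapsto\phi((1,-1))$ (with $(1,-1)\in H\mathbb Z[2]$) define an isomorphism of simplicial sets $\Gamma(H\mathbb Z,R)_\ast\cong FDL(R)_\ast$, natural in $R$.
   Context: Let $[n]=\{0,1,\dots,n\}$, pointed at $0$. A $\Gamma$-space is a functor $F$ from the finite pointed sets $[n]$ (with pointed maps) to pointed simplicial sets with $F[0]$ a point; for a pointed map $f$ we write $f$ also for $F(f)$; $\Sigma_n$ acts on $F[n]$ via permutations of $\{1,\dots,n\}$. We identify $[n]\wedge[m]$ with $[nm]$ via $i\wedge j\mapsto (j-1)n+i$. A $\Gamma$-ring is a $\Gamma$-space $R$ with unit $1\in R[1]$ and associative unital multiplication given by natural maps $R(K)\wedge R(L)\to R(K\wedge L)$, $p\wedge q\mapsto pq$; it is discrete if all $R(K)$ are sets; $0\in R[1]$ denotes the basepoint. For $x\in R[2]$, $x^k\in R[2^k]$ is the $k$-fold product. A multiplicative map of $\Gamma$-rings is a natural transformation preserving units and products. Maps: $p^n_i:[n]\to[n-1]$, $p^n_i(j)=j$ ($j<i$), $p^n_i(i)=0$, $p^n_i(j)=j-1$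 ($j>i$); for $1\le i<j\le n$ and $1\le k\le n-1$, $s^n_{i,j,k}:[n]\to[n-1]$ sends $0\mapsto0$, $i,j\mapsto k$, and the remaining elements order-preservingly and bijectively onto $\{1,\dots,n-1\}\setminus\{k\}$; $d^n_j:[n-1]\to[n]$ is the order-preserving injection missing $j$. $H\mathbb{Z}$ is the $\Gamma$-ring with $H\mathbb{Z}(K)$ the reduced free abelian group on $K$, pointed maps acting by summing coefficients along fibres, unit the inclusion of generators, multiplication $(\sum a_k k)(\sum b_l l)=\sum a_kb_l (k\wedge l)$. For $k\ge1$, split $\{1,\dots,2^k\}=A_+\sqcup A_-$ where $i\in A_+$ iff the binary expansion of $i-1$ has an even number of digits $1$. The special action of $\Sigma_{2^{k-1}}\times\Sigma_{2^{k-1}}$ on $F[2^k]$ is the action of the group of permutations of $\{1,\dots,2^k\}$ preserving $A_+$ and $A_-$. Let $\sigma$ be the nontrivial element of $\Sigma_2$. A formal difference law in a discrete $\Gamma$-ring $R$ is $r\in R[2]$ such that: (1) $p^2_2(r)=1$ and $s^2_{1,2,1}(r)=0$; (2) $p^2_1(r)\,r=r\,p^2_1(r)=\sigma(r)$ in $R[2]$; (3) for every $k\ge1$, $r^k$ is fixed under the special action; (4) for every $k\ge1$, all $1\le i<j\le 2^k$ with one of $i,j$ in $A_+$ and the other in $A_-$, and all $1\le l\le 2^k-1$: $s^{2^k}_{i,j,l}(r^k)=d^{2^k-1}_l\,p^{2^k-1}_i\,p^{2^k}_j(r^k)$. *)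

theory Defs
  imports Main
begin

text \<open>A pointed map [n] -> [m] is represented extensionally by a function nat => nat
  which is 0 at 0, lands in {0..m} on {0..n}, and is 0 outside {0..n}.\<close>

definition ptd_map :: "nat \<Rightarrow> nat \<Rightarrow> (nat \<Rightarrow> nat) \<Rightarrow> bool" where
  "ptd_map n m f \<longleftrightarrow> f 0 = 0 \<and> (\<forall>i\<le>n. f i \<le> m) \<and> (\<forall>i>n. f i = 0)"

definition idp :: "nat \<Rightarrow> nat \<Rightarrow> nat" where
  "idp n = (\<lambda>i. if i \<le> n then i else 0)"

text \<open>Smash product f \<and> g : [n*m] -> [n'*m'] of f : [n] -> [n'] and g : [m] -> [m'],
  using the identification [n]\<and>[m] = [nm], i\<and>j \<mapsto> (j-1)n+i.\<close>

definition smash_map :: "nat \<Rightarrow> nat \<Rightarrow> (nat \<Rightarrow> nat) \<Rightarrow> nat \<Rightarrow> (nat \<Rightarrow> nat) \<Rightarrow> nat \<Rightarrow> nat" where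
  "smash_map n n' f m g = (\<lambda>k. if 1 \<le> k \<and> k \<le> n * m then
      (let i = (k - 1) mod n + 1; j = (k - 1) div n + 1 in
        if f i = 0 \<or> g j = 0 then 0 else (g j - 1) * n' + f i)
    else 0)"

record 'a gring =
  gcar  :: "nat \<Rightarrow> 'a set"
  gbase :: "nat \<Rightarrow> 'a"
  gact  :: "nat \<Rightarrow> nat \<Rightarrow> (nat \<Rightarrow> nat) \<Rightarrow> 'a \<Rightarrow> 'a"
  gone  :: "'a"
  gmul  :: "nat \<Rightarrow> nat \<Rightarrow> 'a \<Rightarrow> 'a \<Rightarrow> 'a"

definition discrete_gamma_ring :: "'a gring \<Rightarrow> bool" where
  "discrete_gamma_ring R \<longleftrightarrow>
     (\<forall>n. gbase R n \<in> gcar R n) \<and>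
     gcar R 0 = {gbase R 0} \<and>
     (\<forall>n m f x. ptd_map n m f \<longrightarrow> x \<in> gcar R n \<longrightarrow> gact R n m f x \<in> gcar R m) \<and>
     (\<forall>n m f. ptd_map n m f \<longrightarrow> gact R n m f (gbase R n) = gbase R m) \<and>
     (\<forall>n x. x \<in> gcar R n \<longrightarrow> gact R n n (idp n) x = x) \<and>
     (\<forall>n m k f g x. ptd_map n m f \<longrightarrow> ptd_map m k g \<longrightarrow> x \<in> gcar R n \<longrightarrow>
         gact R n k (g \<circ> f) x = gact R m k g (gact R n m f x)) \<and>
     gone R \<in> gcar R 1 \<and>
     (\<forall>n m x y. x \<in> gcar R n \<longrightarrow> y \<in> gcar R m \<longrightarrow> gmul R n m x y \<in> gcar R (n * m)) \<and>
     (\<forall>n m y. y \<in> gcar R m \<longrightarrow> gmul R n m (gbase R n) y = gbase R (n * m)) \<and>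
     (\<forall>n m x. x \<in> gcar R n \<longrightarrow> gmul R n m x (gbase R m) = gbase R (n * m)) \<and>
     (\<forall>n n' m m' f g x y. ptd_map n n' f \<longrightarrow> ptd_map m m' g \<longrightarrow>
         x \<in> gcar R n \<longrightarrow> y \<in> gcar R m \<longrightarrow>
         gmul R n' m' (gact R n n' f x) (gact R m m' g y)
           = gact R (n * m) (n' * m') (smash_map n n' f m g) (gmul R n m x y)) \<and>
     (\<forall>n m k x y z. x \<in> gcar R n \<longrightarrow> y \<in> gcar R m \<longrightarrow> z \<in> gcar R k \<longrightarrow>
         gmul R (n * m) k (gmul R n m x y) z = gmul R n (m * k) x (gmul R m k y z)) \<and>
     (\<forall>n x. x \<in> gcar R n \<longrightarrow> gmul R 1 n (gone R) x = x \<and> gmul R n 1 x (gone R) = x)"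

definition mult_map :: "'a gring \<Rightarrow> 'b gring \<Rightarrow> (nat \<Rightarrow> 'a \<Rightarrow> 'b) \<Rightarrow> bool" where
  "mult_map R S h \<longleftrightarrow>
     (\<forall>n x. x \<in> gcar R n \<longrightarrow> h n x \<in> gcar S n) \<and>
     (\<forall>n. h n (gbase R n) = gbase S n) \<and>
     (\<forall>n m f x. ptd_map n m f \<longrightarrow> x \<in> gcar R n \<longrightarrow>
         h m (gact R n m f x) = gact S n m f (h n x)) \<and>
     h 1 (gone R) = gone S \<and>
     (\<forall>n m x y. x \<in> gcar R n \<longrightarrow> y \<in> gcar R m \<longrightarrow>
         h (n * m) (gmul R n m x y) = gmul S n m (h n x) (h m y))"

definition mult_maps :: "'a gring \<Rightarrow> 'b gring \<Rightarrow> (nat \<Rightarrow> 'a \<Rightarrow> 'b) set" where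
  "mult_maps R S = {h. mult_map R S h \<and> (\<forall>n x. x \<notin> gcar R n \<longrightarrow> h n x = undefined)}"

definition HZ :: "(nat \<Rightarrow> int) gring" where
  "HZ = \<lparr> gcar = (\<lambda>n. {x. \<forall>i. (i = 0 \<or> n < i) \<longrightarrow> x i = 0}),
          gbase = (\<lambda>n. (\<lambda>_. 0)),
          gact = (\<lambda>n m f x. (\<lambda>j. if 1 \<le> j \<and> j \<le> m then (\<Sum>i\<in>{i. 1 \<le> i \<and> i \<le> n \<and> f i = j}. x i) else 0)),
          gone = (\<lambda>i. if i = 1 then 1 else 0),
          gmul = (\<lambda>n m x y. (\<lambda>k. if 1 \<le> k \<and> k \<le> n * m
                      then x ((k - 1) mod n + 1) * y ((k - 1) div n + 1) else 0)) \<rparr>"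

definition one_minus_one :: "nat \<Rightarrow> int" where
  "one_minus_one = (\<lambda>i. if i = 1 then 1 else if i = 2 then -1 else 0)"

definition proj :: "nat \<Rightarrow> nat \<Rightarrow> nat \<Rightarrow> nat" where
  "proj n i = (\<lambda>j. if j < i then j else if j = i then 0 else if j \<le> n then j - 1 else 0)"

definition sfold :: "nat \<Rightarrow> nat \<Rightarrow> nat \<Rightarrow> nat \<Rightarrow> nat \<Rightarrow> nat" where
  "sfold n i j k = (\<lambda>l. if l = 0 \<or> n < l then 0 else if l = i \<or> l = j then k else
      (let c = l - (if i < l then 1 else 0) - (if j < l then 1 else 0) in
        if c < k then c else c + 1))"

definition dinj :: "nat \<Rightarrow> nat \<Rightarrow> nat \<Rightarrow> nat" where
  "dinj n j = (\<lambda>l. if l \<le> n - 1 then (if l < j then l else l + 1) else 0)"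

definition swap2 :: "nat \<Rightarrow> nat" where
  "swap2 = (\<lambda>i. if i = 1 then 2 else if i = 2 then 1 else 0)"

fun bitcount :: "nat \<Rightarrow> nat" where
  "bitcount n = (if n = 0 then 0 else n mod 2 + bitcount (n div 2))"

definition Apos :: "nat \<Rightarrow> nat set" where
  "Apos k = {i. 1 \<le> i \<and> i \<le> 2 ^ k \<and> even (bitcount (i - 1))}"

primrec gpow :: "'a gring \<Rightarrow> 'a \<Rightarrow> nat \<Rightarrow> 'a" where
  "gpow R x 0 = gone R"
| "gpow R x (Suc k) = gmul R (2 ^ k) 2 (gpow R x k) x"

definition special_perm :: "nat \<Rightarrow> (nat \<Rightarrow> nat) \<Rightarrow> bool" where
  "special_perm k \<pi> \<longleftrightarrow> ptd_map (2 ^ k) (2 ^ k) \<pi> \<and> bij_betw \<pi> {1..2 ^ k} {1..2 ^ k} \<and>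
     (\<forall>i\<in>{1..2 ^ k}. \<pi> i \<in> Apos k \<longleftrightarrow> i \<in> Apos k)"

definition formal_difference_law :: "'a gring \<Rightarrow> 'a \<Rightarrow> bool" where
  "formal_difference_law R r \<longleftrightarrow>
     r \<in> gcar R 2 \<and>
     gact R 2 1 (proj 2 2) r = gone R \<and>
     gact R 2 1 (sfold 2 1 2 1) r = gbase R 1 \<and>
     gmul R 1 2 (gact R 2 1 (proj 2 1) r) r = gact R 2 2 swap2 r \<and>
     gmul R 2 1 r (gact R 2 1 (proj 2 1) r) = gact R 2 2 swap2 r \<and>
     (\<forall>k\<ge>1. \<forall>\<pi>. special_perm k \<pi> \<longrightarrow> gact R (2 ^ k) (2 ^ k) \<pi> (gpow R r k) = gpow R r k) \<and>
     (\<forall>k\<ge>1. \<forall>i j l. 1 \<le> i \<and> i < j \<and> j \<le> 2 ^ k \<and> (i \<in> Apos k \<longleftrightarrow> j \<notin> Apos k) \<and>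
         1 \<le> l \<and> l \<le> 2 ^ k - 1 \<longrightarrow>
         gact R (2 ^ k) (2 ^ k - 1) (sfold (2 ^ k) i j l) (gpow R r k)
         = gact R (2 ^ k - 2) (2 ^ k - 1) (dinj (2 ^ k - 1) l)
             (gact R (2 ^ k - 1) (2 ^ k - 2) (proj (2 ^ k - 1) i)
               (gact R (2 ^ k) (2 ^ k - 1) (proj (2 ^ k) j) (gpow R r k))))"

definition delta_map :: "nat \<Rightarrow> nat \<Rightarrow> (nat \<Rightarrow> nat) \<Rightarrow> bool" where
  "delta_map p q \<theta> \<longleftrightarrow> (\<forall>i j. i \<le> j \<longrightarrow> j \<le> p \<longrightarrow> \<theta> i \<le> \<theta> j) \<and> (\<forall>i\<le>p. \<theta> i \<le> q) \<and> (\<forall>i>p. \<theta> i = 0)"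

definition delta_comp :: "nat \<Rightarrow> (nat \<Rightarrow> nat) \<Rightarrow> (nat \<Rightarrow> nat) \<Rightarrow> nat \<Rightarrow> nat" where
  "delta_comp p \<psi> \<theta> = (\<lambda>i. if i \<le> p then \<psi> (\<theta> i) else 0)"

text \<open>A Gamma-ring in simplicial sets, given by its discrete Gamma-rings of q-simplices Rs q
  and the simplicial operators sop p q \<theta> n : R(n)_q -> R(n)_p for \<theta> : [p] -> [q].\<close>

definition simplicial_gamma_ring ::
    "(nat \<Rightarrow> 'a gring) \<Rightarrow> (nat \<Rightarrow> nat \<Rightarrow> (nat \<Rightarrow> nat) \<Rightarrow> nat \<Rightarrow> 'a \<Rightarrow> 'a) \<Rightarrow> bool" where
  "simplicial_gamma_ring Rs sop \<longleftrightarrow>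
     (\<forall>q. discrete_gamma_ring (Rs q)) \<and>
     (\<forall>p q \<theta>. delta_map p q \<theta> \<longrightarrow> mult_map (Rs q) (Rs p) (sop p q \<theta>)) \<and>
     (\<forall>q n x. x \<in> gcar (Rs q) n \<longrightarrow> sop q q (idp q) n x = x) \<and>
     (\<forall>p q r \<theta> \<psi> n x. delta_map p q \<theta> \<longrightarrow> delta_map q r \<psi> \<longrightarrow> x \<in> gcar (Rs r) n \<longrightarrow>
         sop p r (delta_comp p \<psi> \<theta>) n x = sop p q \<theta> n (sop q r \<psi> n x))"

definition simplicial_gamma_ring_map ::
    "(nat \<Rightarrow> 'a gring) \<Rightarrow> (nat \<Rightarrow> nat \<Rightarrow> (nat \<Rightarrow> nat) \<Rightarrow> nat \<Rightarrow> 'a \<Rightarrow> 'a) \<Rightarrow>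
     (nat \<Rightarrow> 'b gring) \<Rightarrow> (nat \<Rightarrow> nat \<Rightarrow> (nat \<Rightarrow> nat) \<Rightarrow> nat \<Rightarrow> 'b \<Rightarrow> 'b) \<Rightarrow>
     (nat \<Rightarrow> nat \<Rightarrow> 'a \<Rightarrow> 'b) \<Rightarrow> bool" where
  "simplicial_gamma_ring_map Rs sop Rs' sop' g \<longleftrightarrow>
     (\<forall>q. mult_map (Rs q) (Rs' q) (g q)) \<and>
     (\<forall>p q \<theta> n x. delta_map p q \<theta> \<longrightarrow> x \<in> gcar (Rs q) n \<longrightarrow>
         g p n (sop p q \<theta> n x) = sop' p q \<theta> n (g q n x))"

text \<open>Simplicial operator on Gamma(HZ,R)_*: postcomposition (kept extensional).\<close>

definition hz_pull :: "(nat \<Rightarrow> nat \<Rightarrow> (nat \<Rightarrow> nat) \<Rightarrow> nat \<Rightarrow> 'a \<Rightarrow> 'a) \<Rightarrow> nat \<Rightarrow> nat \<Rightarrow> (nat \<Rightarrow> nat)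
    \<Rightarrow> (nat \<Rightarrow> (nat \<Rightarrow> int) \<Rightarrow> 'a) \<Rightarrow> nat \<Rightarrow> (nat \<Rightarrow> int) \<Rightarrow> 'a" where
  "hz_pull sop p q \<theta> \<phi> = (\<lambda>n x. if x \<in> gcar HZ n then sop p q \<theta> n (\<phi> n x) else undefined)"

definition hz_post :: "(nat \<Rightarrow> 'a \<Rightarrow> 'b) \<Rightarrow> (nat \<Rightarrow> (nat \<Rightarrow> int) \<Rightarrow> 'a) \<Rightarrow> nat \<Rightarrow> (nat \<Rightarrow> int) \<Rightarrow> 'b" where
  "hz_post h \<phi> = (\<lambda>n x. if x \<in> gcar HZ n then h n (\<phi> n x) else undefined)"

end

theory Submission
  imports Defs
begin


lemma ptd_comp: "ptd_map n m f \<Longrightarrow> ptd_map m k g \<Longrightarrow> ptd_map n k (g \<circ> f)"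
  unfolding ptd_map_def by auto

lemma ptd_mono: assumes "ptd_map n m f" "n \<le> n'" shows "ptd_map n' m f"
proof -
  have "f i \<le> m" for i using assms unfolding ptd_map_def by (cases "i \<le> n") auto
  then show ?thesis using assms unfolding ptd_map_def by auto
qed

declare bitcount.simps[simp del]
lemma bitcount_0[simp]: "bitcount 0 = 0"
  by (subst bitcount.simps) simp
lemma bitcount_pos: "n > 0 \<Longrightarrow> bitcount n = n mod 2 + bitcount (n div 2)"
  by (subst bitcount.simps) simp

lemma bitcount_add: "a < 2 ^ k \<Longrightarrow> bitcount (a + 2 ^ k * b) = bitcount a + bitcount b"
proof (induction k arbitrary: a)
  case 0
  then show ?case by simp
next
  case (Suc k)
  have e1: "(a + 2 ^ Suc k * b) div 2 = a div 2 + 2 ^ k * b" by simp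
  have e2: "(a + 2 ^ Suc k * b) mod 2 = a mod 2" by (simp add: mult.assoc)
  have lt: "a div 2 < 2 ^ k" using Suc.prems by simp
  show ?case
  proof (cases "a + 2 ^ Suc k * b = 0")
    case True then show ?thesis by simp
  next
    case False
    then have "bitcount (a + 2 ^ Suc k * b) = a mod 2 + bitcount (a div 2 + 2 ^ k * b)"
      using e1 e2 bitcount_pos[of "a + 2 ^ Suc k * b"] by simp
    also have "\<dots> = a mod 2 + bitcount (a div 2) + bitcount b" using Suc.IH[OF lt] by simp
    also have "a mod 2 + bitcount (a div 2) = bitcount a"
      using bitcount_pos[of a] by (cases "a = 0") simp_all
    finally show ?thesis .
  qed
qed

definition sg :: "nat \<Rightarrow> int" where
  "sg i = (if even (bitcount (i - 1)) then 1 else -1)"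

lemma HZ_simps[simp]:
  "gcar HZ n = {x. \<forall>i. (i = 0 \<or> n < i) \<longrightarrow> x i = 0}"
  "gbase HZ n = (\<lambda>_. 0)"
  "gact HZ n m f x = (\<lambda>j. if 1 \<le> j \<and> j \<le> m then (\<Sum>i\<in>{i. 1 \<le> i \<and> i \<le> n \<and> f i = j}. x i) else 0)"
  "gone HZ = (\<lambda>i. if i = 1 then 1 else 0)"
  "gmul HZ n m x y = (\<lambda>k. if 1 \<le> k \<and> k \<le> n * m
                      then x ((k - 1) mod n + 1) * y ((k - 1) div n + 1) else 0)"
  by (simp_all add: HZ_def)

lemma tpow: "gpow HZ one_minus_one k = (\<lambda>i. if 1 \<le> i \<and> i \<le> 2 ^ k then sg i else 0)"
proof (induction k)
  case 0
  show ?case by (auto simp: sg_def)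
next
  case (Suc k)
  show ?case
  proof
    fix x
    show "gpow HZ one_minus_one (Suc k) x = (if 1 \<le> x \<and> x \<le> 2 ^ Suc k then sg x else 0)"
    proof (cases "1 \<le> x \<and> x \<le> 2 ^ Suc k")
      case False then show ?thesis by (auto simp: Suc)
    next
      case True
      define a where "a = (x - 1) mod 2 ^ k"
      define b where "b = (x - 1) div 2 ^ k"
      have ab: "x - 1 = a + 2 ^ k * b" unfolding a_def b_def by simp
      have alt: "a < 2 ^ k" unfolding a_def by simp
      have "x - 1 < 2 * 2 ^ k" using True by (simp only: power_Suc) linarith
      then have blt: "b < 2" unfolding b_def by (simp add: div_less_iff_less_mult mult.commute)
      have bc: "bitcount (x - 1) = bitcount a + bitcount b" using ab bitcount_add[OF alt] by simp
      have "gpow HZ one_minus_one (Suc k) x = sg (a + 1) * one_minus_one (b + 1)"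
      proof -
        have "Suc ((x - Suc 0) mod 2 ^ k) \<le> 2 ^ k" by (simp add: Suc_leI)
        then show ?thesis using True by (simp add: Suc a_def b_def)
      qed
      also have "\<dots> = sg x"
        proof -
        have "b = 0 \<or> b = 1" using blt by linarith
        then show ?thesis using bc bitcount_pos[of 1] by (elim disjE) (auto simp: sg_def one_minus_one_def)
      qed
      finally show ?thesis using True by simp
    qed
  qed
qed


lemma HZ_gact_car[simp]: "gact HZ n m f x \<in> gcar HZ m" by simp
lemma HZ_gmul_car[simp]: "gmul HZ n m x y \<in> gcar HZ (n * m)" by simp
lemma HZ_gone_car[simp]: "gone HZ \<in> gcar HZ 1" by simp
lemma HZ_gbase_car[simp]: "gbase HZ n \<in> gcar HZ n" by simp

lemma HZ_comp:
  assumes f: "ptd_map n m f" and g: "ptd_map m k g"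
  shows "gact HZ m k g (gact HZ n m f x) = gact HZ n k (g \<circ> f) x"
proof
  fix j
  show "gact HZ m k g (gact HZ n m f x) j = gact HZ n k (g \<circ> f) x j"
  proof (cases "1 \<le> j \<and> j \<le> k")
    case False then show ?thesis by auto
  next
    case True
    define S where "S = {i. 1 \<le> i \<and> i \<le> n \<and> g (f i) = j}"
    define T where "T = {y. 1 \<le> y \<and> y \<le> m \<and> g y = j}"
    have fS: "finite S" unfolding S_def by (rule finite_subset[of _ "{..n}"]) auto
    have fT: "finite T" unfolding T_def by (rule finite_subset[of _ "{..m}"]) auto
    have sub: "f ` S \<subseteq> T"
    proof
      fix y assume "y \<in> f ` S"
      then obtain i where i: "i \<in> S" "y = f i" by auto
      have "g 0 = 0" using g unfolding ptd_map_def by simp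
      then have "f i \<noteq> 0" using i True unfolding S_def by (cases "f i") auto
      moreover have "f i \<le> m" using f i unfolding S_def ptd_map_def by auto
      ultimately show "y \<in> T" using i unfolding S_def T_def by auto
    qed
    have "gact HZ m k g (gact HZ n m f x) j = (\<Sum>y\<in>T. \<Sum>i\<in>{i. 1 \<le> i \<and> i \<le> n \<and> f i = y}. x i)"
      using True unfolding T_def by (auto intro!: sum.cong)
    also have "\<dots> = (\<Sum>y\<in>T. \<Sum>i\<in>{i. i \<in> S \<and> f i = y}. x i)"
      by (rule sum.cong) (auto simp: S_def T_def intro!: sum.cong)
    also have "\<dots> = (\<Sum>i\<in>S. x i)" by (rule sum.group[OF fS fT sub])
    also have "\<dots> = gact HZ n k (g \<circ> f) x j" using True unfolding S_def by simp
    finally show ?thesis .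
  qed
qed

lemma smash_ptd:
  assumes f: "ptd_map n n' f" and g: "ptd_map m m' g"
  shows "ptd_map (n * m) (n' * m') (smash_map n n' f m g)"
proof -
  have "smash_map n n' f m g z \<le> n' * m'" for z
  proof (cases "1 \<le> z \<and> z \<le> n * m")
    case True
    define i where "i = (z - 1) mod n + 1"
    define j where "j = (z - 1) div n + 1"
    have "f i \<le> n'" using f unfolding ptd_map_def by (cases "i \<le> n") auto
    have gj: "g j \<le> m'" using g unfolding ptd_map_def by (cases "j \<le> m") auto
    show ?thesis
    proof (cases "f i = 0 \<or> g j = 0")
      case True
      then show ?thesis unfolding smash_map_def Let_def i_def j_def by auto
    next
      case False
      then have m1: "1 \<le> m'" using gj by linarith
      have "(g j - 1) * n' + f i \<le> (m' - 1) * n' + n'"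
        using \<open>f i \<le> n'\<close> gj by (intro add_le_mono mult_le_mono1 diff_le_mono)
      also have "\<dots> = n' * m'" using m1 by (cases m') (auto simp: algebra_simps)
      finally show ?thesis using \<open>1 \<le> z \<and> z \<le> n * m\<close> unfolding smash_map_def Let_def i_def j_def by auto
    qed
  next
    case False then show ?thesis unfolding smash_map_def by auto
  qed
  moreover have "smash_map n n' f m g 0 = 0" "\<forall>z>n*m. smash_map n n' f m g z = 0"
    by (auto simp: smash_map_def)
  ultimately show ?thesis unfolding ptd_map_def by auto
qed

lemma decomp1:
  assumes "0 < (n::nat)" "1 \<le> (i::nat)" "i \<le> n" "1 \<le> (j::nat)"
  shows "((j - 1) * n + i - 1) mod n + 1 = i" "((j - 1) * n + i - 1) div n + 1 = j"
proof -
  have e0: "(j - 1) * n + i - 1 = (j - 1) * n + (i - 1)" using assms by linarith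
  have e: "(j - 1) * n + i - 1 = (i - 1) + n * (j - 1)" unfolding e0 by (simp add: mult.commute)
  have lt: "i - 1 < n" using assms by simp
  show "((j - 1) * n + i - 1) mod n + 1 = i" unfolding e mod_mult_self2 using lt assms by simp
  have "(i - 1 + n * (j - 1)) div n = (i - 1) div n + (j - 1)" using assms by (simp only: div_mult_self2)
  then show "((j - 1) * n + i - 1) div n + 1 = j" unfolding e using lt assms by simp
qed

lemma HZ_nat:
  assumes f: "ptd_map n n' f" and g: "ptd_map m m' g"
  shows "gmul HZ n' m' (gact HZ n n' f x) (gact HZ m m' g y)
       = gact HZ (n * m) (n' * m') (smash_map n n' f m g) (gmul HZ n m x y)"
proof
  fix c
  show "gmul HZ n' m' (gact HZ n n' f x) (gact HZ m m' g y) c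
       = gact HZ (n * m) (n' * m') (smash_map n n' f m g) (gmul HZ n m x y) c"
  proof (cases "1 \<le> c \<and> c \<le> n' * m'")
    case False then show ?thesis by auto
  next
    case True
    then have n'0: "0 < n'" by (cases n') auto
    define c1 where "c1 = (c - 1) mod n' + 1"
    define c2 where "c2 = (c - 1) div n' + 1"
    have c1: "1 \<le> c1" "c1 \<le> n'" unfolding c1_def using n'0 by (auto simp: Suc_leI)
    have "c - 1 < n' * m'" using True by linarith
    then have "(c - 1) div n' < m'" using n'0 by (simp add: div_less_iff_less_mult mult.commute)
    then have c2: "1 \<le> c2" "c2 \<le> m'" unfolding c2_def by auto
    have cdec: "c = (c2 - 1) * n' + c1"
    proof -
      have "(c - 1) div n' * n' + (c - 1) mod n' = c - 1" by (rule div_mult_mod_eq)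
      then show ?thesis unfolding c1_def c2_def using True by (simp only: add_diff_cancel_right') linarith
    qed
    define I where "I = {i. 1 \<le> i \<and> i \<le> n \<and> f i = c1}"
    define J where "J = {j. 1 \<le> j \<and> j \<le> m \<and> g j = c2}"
    define Z where "Z = {z. 1 \<le> z \<and> z \<le> n * m \<and> smash_map n n' f m g z = c}"
    define h where "h = (\<lambda>(i::nat, j::nat). (j - 1) * n + i)"
    have fI: "finite I" unfolding I_def by (rule finite_subset[of _ "{..n}"]) auto
    have fJ: "finite J" unfolding J_def by (rule finite_subset[of _ "{..m}"]) auto
    have LHS: "gmul HZ n' m' (gact HZ n n' f x) (gact HZ m m' g y) c = (\<Sum>p\<in>I \<times> J. x (fst p) * y (snd p))"
      using True c1 c2 unfolding I_def J_def c1_def c2_def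
      by (simp add: sum_product sum.cartesian_product case_prod_beta)
    have RHS: "gact HZ (n * m) (n' * m') (smash_map n n' f m g) (gmul HZ n m x y) c
       = (\<Sum>z\<in>Z. x ((z - 1) mod n + 1) * y ((z - 1) div n + 1))"
      using True unfolding Z_def by (auto intro!: sum.cong)
    have bij: "bij_betw h (I \<times> J) Z"
    proof (rule bij_betwI')
      fix p q assume "p \<in> I \<times> J" "q \<in> I \<times> J"
      moreover obtain i j i' j' where pq: "p = (i, j)" "q = (i', j')" by (cases p, cases q)
      ultimately have ij: "1 \<le> i" "i \<le> n" "1 \<le> j" "1 \<le> i'" "i' \<le> n" "1 \<le> j'"
        unfolding I_def J_def by auto
      then have n0: "0 < n" by simp
      show "(h p = h q) = (p = q)"
      proof
        assume "h p = h q"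
        then have e: "(j - 1) * n + i = (j' - 1) * n + i'" unfolding h_def pq by simp
        have "i = i'" using decomp1(1)[OF n0 ij(1,2,3)] decomp1(1)[OF n0 ij(4,5,6)] e by simp
        moreover have "j = j'" using decomp1(2)[OF n0 ij(1,2,3)] decomp1(2)[OF n0 ij(4,5,6)] e by simp
        ultimately show "p = q" using pq by simp
      qed simp
    next
      fix p assume p: "p \<in> I \<times> J"
      obtain i j where pij: "p = (i, j)" by (cases p)
      have i: "1 \<le> i" "i \<le> n" "f i = c1" and j: "1 \<le> j" "j \<le> m" "g j = c2"
        using p unfolding pij I_def J_def by auto
      have n0: "0 < n" using i by simp
      have hz: "h p = (j - 1) * n + i" unfolding h_def pij by simp
      have "(j - 1) * n + i \<le> (m - 1) * n + n" using i j by (meson add_le_mono diff_le_mono mult_le_mono1)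
      also have "\<dots> = n * m" using j by (cases m) (auto simp: algebra_simps)
      finally have le: "h p \<le> n * m" using hz by simp
      have "smash_map n n' f m g (h p) = c"
        using decomp1[OF n0 i(1,2) j(1)] le i j c1 c2 cdec hz
        unfolding smash_map_def Let_def by auto
      then show "h p \<in> Z" unfolding Z_def using le hz i by auto
    next
      fix z assume z: "z \<in> Z"
      have z1: "1 \<le> z" "z \<le> n * m" and sz: "smash_map n n' f m g z = c" using z unfolding Z_def by auto
      have n0: "0 < n" using z1 by (cases n) auto
      define i where "i = (z - 1) mod n + 1"
      define j where "j = (z - 1) div n + 1"
      have "z - 1 < n * m" using z1 by linarith
      then have "(z - 1) div n < m" using n0 by (simp add: div_less_iff_less_mult mult.commute)
      then have ij: "1 \<le> i" "i \<le> n" "1 \<le> j" "j \<le> m" unfolding i_def j_def using n0 by (auto simp: Suc_leI)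
      have fi: "f i \<noteq> 0" "g j \<noteq> 0" "(g j - 1) * n' + f i = c"
        using sz z1 True unfolding smash_map_def Let_def i_def j_def by (auto split: if_splits)
      have fin': "f i \<le> n'" using f ij unfolding ptd_map_def by auto
      have fi1: "1 \<le> f i" "1 \<le> g j" using fi by auto
      have "c1 = f i" "c2 = g j" unfolding c1_def c2_def
        using decomp1[OF n'0 fi1(1) fin' fi1(2)] fi(3) by auto
      moreover have "z = (j - 1) * n + i"
      proof -
        have "(z - 1) div n * n + (z - 1) mod n = z - 1" by (rule div_mult_mod_eq)
        then show ?thesis unfolding i_def j_def using z1 by (simp only: add_diff_cancel_right')
      qed
      ultimately show "\<exists>p\<in>I \<times> J. z = h p" unfolding I_def J_def h_def using ij
        by (intro bexI[of _ "(i, j)"]) auto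
    qed
    have "(\<Sum>z\<in>Z. x ((z - 1) mod n + 1) * y ((z - 1) div n + 1))
        = (\<Sum>p\<in>I \<times> J. x ((h p - 1) mod n + 1) * y ((h p - 1) div n + 1))"
      using sum.reindex_bij_betw[OF bij, symmetric] by simp
    also have "\<dots> = (\<Sum>p\<in>I \<times> J. x (fst p) * y (snd p))"
    proof (rule sum.cong)
      fix p assume p: "p \<in> I \<times> J"
      obtain i j where pij: "p = (i, j)" by (cases p)
      have i: "1 \<le> i" "i \<le> n" and j: "1 \<le> j" using p unfolding pij I_def J_def by auto
      have n0: "0 < n" using i by simp
      show "x ((h p - 1) mod n + 1) * y ((h p - 1) div n + 1) = x (fst p) * y (snd p)"
        using decomp1[OF n0 i j] unfolding pij h_def by simp
    qed simp
    finally show ?thesis using LHS RHS by simp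
  qed
qed


definition gr_closed :: "'a gring \<Rightarrow> bool" where
  "gr_closed R \<longleftrightarrow> gone R \<in> gcar R 1 \<and>
     (\<forall>n m x y. x \<in> gcar R n \<longrightarrow> y \<in> gcar R m \<longrightarrow> gmul R n m x y \<in> gcar R (n * m)) \<and>
     (\<forall>n m f x. ptd_map n m f \<longrightarrow> x \<in> gcar R n \<longrightarrow> gact R n m f x \<in> gcar R m)"

lemma disc_closed: "discrete_gamma_ring R \<Longrightarrow> gr_closed R"
  unfolding discrete_gamma_ring_def gr_closed_def by simp

lemma HZ_closed: "gr_closed HZ"
  unfolding gr_closed_def by (simp only: HZ_gone_car HZ_gmul_car HZ_gact_car) simp

lemma gpow_car: "gr_closed R \<Longrightarrow> r \<in> gcar R 2 \<Longrightarrow> gpow R r k \<in> gcar R (2 ^ k)"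
proof (induction k)
  case 0 then show ?case by (simp add: gr_closed_def)
next
  case (Suc k)
  then have "gmul R (2 ^ k) 2 (gpow R r k) r \<in> gcar R (2 ^ k * 2)" unfolding gr_closed_def by blast
  then show ?case by (simp add: mult.commute)
qed

lemma gpow_push:
  assumes h: "mult_map R S h" and c: "gr_closed R" and r: "r \<in> gcar R 2"
  shows "h (2 ^ k) (gpow R r k) = gpow S (h 2 r) k"
proof (induction k)
  case 0 then show ?case using h by (simp add: mult_map_def)
next
  case (Suc k)
  have "h (2 ^ k * 2) (gmul R (2 ^ k) 2 (gpow R r k) r) = gmul S (2 ^ k) 2 (h (2 ^ k) (gpow R r k)) (h 2 r)"
    using h gpow_car[OF c r] r unfolding mult_map_def by blast
  then show ?case using Suc by (simp add: mult.commute)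
qed

lemma ptd_proj: "1 \<le> i \<Longrightarrow> i \<le> n \<Longrightarrow> ptd_map n (n - 1) (proj n i)"
  unfolding ptd_map_def proj_def by auto

lemma ptd_dinj: "1 \<le> j \<Longrightarrow> ptd_map (n - 1) n (dinj n j)"
  unfolding ptd_map_def dinj_def by auto

lemma ptd_sfold: "1 \<le> i \<Longrightarrow> i < j \<Longrightarrow> j \<le> n \<Longrightarrow> 1 \<le> k \<Longrightarrow> k \<le> n - 1 \<Longrightarrow>
    ptd_map n (n - 1) (sfold n i j k)"
  unfolding ptd_map_def sfold_def Let_def by auto

lemma ptd_swap2: "ptd_map 2 2 swap2"
  unfolding ptd_map_def swap2_def by auto

lemma ptd_idp: "ptd_map n n (idp n)"
  unfolding ptd_map_def idp_def by auto

lemma push_fdl: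
  assumes h: "mult_map R S h" and c: "gr_closed R" and F: "formal_difference_law R r"
  shows "formal_difference_law S (h 2 r)"
proof -
  have r: "r \<in> gcar R 2" using F unfolding formal_difference_law_def by blast
  have car: "\<And>n x. x \<in> gcar R n \<Longrightarrow> h n x \<in> gcar S n" using h unfolding mult_map_def by blast
  have act: "\<And>n m f x. ptd_map n m f \<Longrightarrow> x \<in> gcar R n \<Longrightarrow> h m (gact R n m f x) = gact S n m f (h n x)"
    using h unfolding mult_map_def by blast
  have mul: "\<And>n m x y. x \<in> gcar R n \<Longrightarrow> y \<in> gcar R m \<Longrightarrow> h (n * m) (gmul R n m x y) = gmul S n m (h n x) (h m y)"
    using h unfolding mult_map_def by blast
  have one: "h 1 (gone R) = gone S" and base: "\<And>n. h n (gbase R n) = gbase S n"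
    using h unfolding mult_map_def by blast+
  have cact: "\<And>n m f x. ptd_map n m f \<Longrightarrow> x \<in> gcar R n \<Longrightarrow> gact R n m f x \<in> gcar R m"
    using c unfolding gr_closed_def by blast
  have p22: "ptd_map 2 1 (proj 2 2)" and p21: "ptd_map 2 1 (proj 2 1)" and s: "ptd_map 2 1 (sfold 2 1 2 1)"
    using ptd_proj[of 2 2] ptd_proj[of 1 2] ptd_sfold[of 1 2 2 1] by auto
  have gp: "\<And>k. h (2 ^ k) (gpow R r k) = gpow S (h 2 r) k" by (rule gpow_push[OF h c r])
  have gpc: "\<And>k. gpow R r k \<in> gcar R (2 ^ k)" by (rule gpow_car[OF c r])
  show ?thesis unfolding formal_difference_law_def
  proof (intro conjI allI impI)
    show "h 2 r \<in> gcar S 2" using car r by blast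
    show "gact S 2 1 (proj 2 2) (h 2 r) = gone S"
      using act[OF p22 r] F one unfolding formal_difference_law_def by simp
    show "gact S 2 1 (sfold 2 1 2 1) (h 2 r) = gbase S 1"
      using act[OF s r] F base unfolding formal_difference_law_def by simp
    have pr: "gact R 2 1 (proj 2 1) r \<in> gcar R 1" using cact[OF p21 r] .
    show "gmul S 1 2 (gact S 2 1 (proj 2 1) (h 2 r)) (h 2 r) = gact S 2 2 swap2 (h 2 r)"
      using mul[OF pr r] act[OF p21 r] act[OF ptd_swap2 r] F unfolding formal_difference_law_def by simp
    show "gmul S 2 1 (h 2 r) (gact S 2 1 (proj 2 1) (h 2 r)) = gact S 2 2 swap2 (h 2 r)"
      using mul[OF r pr] act[OF p21 r] act[OF ptd_swap2 r] F unfolding formal_difference_law_def by simp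
  next
    fix k :: nat and \<pi> assume k: "1 \<le> k" and sp: "special_perm k \<pi>"
    have pp: "ptd_map (2 ^ k) (2 ^ k) \<pi>" using sp unfolding special_perm_def by blast
    have "gact R (2 ^ k) (2 ^ k) \<pi> (gpow R r k) = gpow R r k" using F k sp unfolding formal_difference_law_def by blast
    then show "gact S (2 ^ k) (2 ^ k) \<pi> (gpow S (h 2 r) k) = gpow S (h 2 r) k"
      using act[OF pp gpc[of k]] gp[of k] by simp
  next
    fix k i j l :: nat
    assume k: "1 \<le> k" and ijl: "1 \<le> i \<and> i < j \<and> j \<le> 2 ^ k \<and> (i \<in> Apos k \<longleftrightarrow> j \<notin> Apos k) \<and> 1 \<le> l \<and> l \<le> 2 ^ k - 1"
    let ?N = "2 ^ k :: nat"
    let ?X = "gpow R r k"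
    have E: "gact R ?N (?N - 1) (sfold ?N i j l) ?X
         = gact R (?N - 2) (?N - 1) (dinj (?N - 1) l) (gact R (?N - 1) (?N - 2) (proj (?N - 1) i) (gact R ?N (?N - 1) (proj ?N j) ?X))"
      using F k ijl unfolding formal_difference_law_def by blast
    have ps: "ptd_map ?N (?N - 1) (sfold ?N i j l)" using ijl by (intro ptd_sfold) auto
    have pj: "ptd_map ?N (?N - 1) (proj ?N j)" using ijl by (intro ptd_proj) auto
    have e2: "?N - 1 - 1 = ?N - 2" by simp
    have ile: "1 \<le> i" "i \<le> ?N - 1" using ijl by linarith+
    have pi: "ptd_map (?N - 1) (?N - 2) (proj (?N - 1) i)" using ptd_proj[OF ile] unfolding e2 .
    have pd: "ptd_map (?N - 2) (?N - 1) (dinj (?N - 1) l)" using ijl ptd_dinj[of l "?N - 1"] unfolding e2 by auto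
    have X1: "gact R ?N (?N - 1) (proj ?N j) ?X \<in> gcar R (?N - 1)" using cact[OF pj gpc] .
    have X2: "gact R (?N - 1) (?N - 2) (proj (?N - 1) i) (gact R ?N (?N - 1) (proj ?N j) ?X) \<in> gcar R (?N - 2)"
      using cact[OF pi X1] .
    show "gact S ?N (?N - 1) (sfold ?N i j l) (gpow S (h 2 r) k)
         = gact S (?N - 2) (?N - 1) (dinj (?N - 1) l) (gact S (?N - 1) (?N - 2) (proj (?N - 1) i) (gact S ?N (?N - 1) (proj ?N j) (gpow S (h 2 r) k)))"
      using arg_cong[OF E, of "h (?N - 1)"] act[OF ps gpc] act[OF pd X2] act[OF pi X1] act[OF pj gpc] gp[of k]
      by simp
  qed
qed

lemma post_maps:
  assumes p: "mult_map HZ R \<phi>" and h: "mult_map R S h"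
  shows "(\<lambda>n x. if x \<in> gcar HZ n then h n (\<phi> n x) else undefined) \<in> mult_maps HZ S"
proof -
  let ?c = "\<lambda>n x. if x \<in> gcar HZ n then h n (\<phi> n x) else undefined"
  have pc: "\<And>n x. x \<in> gcar HZ n \<Longrightarrow> \<phi> n x \<in> gcar R n" using p unfolding mult_map_def by blast
  have hc: "\<And>n x. x \<in> gcar R n \<Longrightarrow> h n x \<in> gcar S n" using h unfolding mult_map_def by blast
  have pa: "\<And>n m f x. ptd_map n m f \<Longrightarrow> x \<in> gcar HZ n \<Longrightarrow> \<phi> m (gact HZ n m f x) = gact R n m f (\<phi> n x)"
    using p unfolding mult_map_def by blast
  have ha: "\<And>n m f x. ptd_map n m f \<Longrightarrow> x \<in> gcar R n \<Longrightarrow> h m (gact R n m f x) = gact S n m f (h n x)"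
    using h unfolding mult_map_def by blast
  have pm: "\<And>n m x y. x \<in> gcar HZ n \<Longrightarrow> y \<in> gcar HZ m \<Longrightarrow> \<phi> (n * m) (gmul HZ n m x y) = gmul R n m (\<phi> n x) (\<phi> m y)"
    using p unfolding mult_map_def by blast
  have hm: "\<And>n m x y. x \<in> gcar R n \<Longrightarrow> y \<in> gcar R m \<Longrightarrow> h (n * m) (gmul R n m x y) = gmul S n m (h n x) (h m y)"
    using h unfolding mult_map_def by blast
  have pb: "\<And>n. \<phi> n (gbase HZ n) = gbase R n" and hb: "\<And>n. h n (gbase R n) = gbase S n"
    using p h unfolding mult_map_def by blast+
  have po: "\<phi> 1 (gone HZ) = gone R" and ho: "h 1 (gone R) = gone S"
    using p h unfolding mult_map_def by blast+
  have "mult_map HZ S ?c"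
    unfolding mult_map_def
  proof (intro conjI allI impI)
    fix n x assume "x \<in> gcar HZ n" then show "?c n x \<in> gcar S n" using pc hc by simp
  next
    fix n show "?c n (gbase HZ n) = gbase S n" using pb hb HZ_gbase_car[of n] by (simp del: HZ_simps)
  next
    fix n m f x assume "ptd_map n m f" "x \<in> gcar HZ n"
    then show "?c m (gact HZ n m f x) = gact S n m f (?c n x)"
      using pa ha pc HZ_gact_car[of n m f x] by (simp del: HZ_simps)
  next
    show "?c 1 (gone HZ) = gone S" using po ho HZ_gone_car by (simp del: HZ_simps)
  next
    fix n m x y assume "x \<in> gcar HZ n" "y \<in> gcar HZ m"
    then show "?c (n * m) (gmul HZ n m x y) = gmul S n m (?c n x) (?c m y)"
      using pm hm pc HZ_gmul_car[of n m x y] by (simp del: HZ_simps)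
  qed
  then show ?thesis unfolding mult_maps_def by (simp del: HZ_simps)
qed


lemma sum2: "(\<Sum>i\<in>{i::nat. 1 \<le> i \<and> i \<le> 2 \<and> P i}. f i) = (if P 1 then f 1 else 0) + (if P 2 then f 2 else 0)"
proof -
  have eq: "{i::nat. 1 \<le> i \<and> i \<le> 2 \<and> P i} = {i\<in>{1..2}. P i}" by auto
  show ?thesis unfolding eq sum.inter_filter[OF finite_atLeastAtMost] by (simp add: numeral_2_eq_2)
qed

lemma HZ_act_at: "1 \<le> c \<Longrightarrow> c \<le> m \<Longrightarrow> gact HZ n m f x c = (\<Sum>i\<in>{i. 1 \<le> i \<and> i \<le> n \<and> f i = c}. x i)"
  by simp

lemma sg1: "sg 1 = 1" and sg2: "sg 2 = -1"
  using bitcount_pos[of 1] by (auto simp: sg_def)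

lemma sg_Apos: "1 \<le> i \<Longrightarrow> i \<le> 2 ^ k \<Longrightarrow> sg i = (if i \<in> Apos k then 1 else -1)"
  unfolding sg_def Apos_def by auto

lemma sd_agree:
  assumes "1 \<le> a" "a < b" "b \<le> N" "1 \<le> l" "l \<le> N - 1" "x \<noteq> a" "x \<noteq> b"
  shows "sfold N a b l x = dinj (N - 1) l (proj (N - 1) a (proj N b x))"
  using assms unfolding sfold_def dinj_def proj_def Let_def by auto

lemma sd_ab:
  assumes "1 \<le> a" "a < b" "b \<le> N" "1 \<le> l"
  shows "dinj (N - 1) l (proj (N - 1) a (proj N b a)) = 0" "dinj (N - 1) l (proj (N - 1) a (proj N b b)) = 0"
    "sfold N a b l a = l" "sfold N a b l b = l"
  using assms unfolding sfold_def dinj_def proj_def Let_def by auto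

lemma sd_nl:
  assumes "1 \<le> l"
  shows "dinj (N - 1) l y \<noteq> l"
  using assms unfolding dinj_def by auto

lemma HZ_fdl: "formal_difference_law HZ one_minus_one"
  unfolding formal_difference_law_def
proof (intro conjI allI impI)
  show "one_minus_one \<in> gcar HZ 2" by (simp add: one_minus_one_def)
  show "gact HZ 2 1 (proj 2 2) one_minus_one = gone HZ"
    by (rule ext) (simp only: HZ_simps sum2, simp add: proj_def one_minus_one_def)
  show "gact HZ 2 1 (sfold 2 1 2 1) one_minus_one = gbase HZ 1"
    by (rule ext) (simp only: HZ_simps sum2, simp add: sfold_def one_minus_one_def)
  show "gmul HZ 1 2 (gact HZ 2 1 (proj 2 1) one_minus_one) one_minus_one = gact HZ 2 2 swap2 one_minus_one"
    by (rule ext) (simp only: HZ_simps sum2, auto simp: proj_def swap2_def one_minus_one_def)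
  show "gmul HZ 2 1 one_minus_one (gact HZ 2 1 (proj 2 1) one_minus_one) = gact HZ 2 2 swap2 one_minus_one"
    by (rule ext) (simp only: HZ_simps sum2, auto simp: proj_def swap2_def one_minus_one_def)
next
  fix k :: nat and \<pi> assume k: "1 \<le> k" and sp: "special_perm k \<pi>"
  let ?N = "2 ^ k :: nat"
  have bij: "bij_betw \<pi> {1..?N} {1..?N}" and pres: "\<forall>i\<in>{1..?N}. \<pi> i \<in> Apos k \<longleftrightarrow> i \<in> Apos k"
    using sp unfolding special_perm_def by auto
  show "gact HZ ?N ?N \<pi> (gpow HZ one_minus_one k) = gpow HZ one_minus_one k"
  proof
    fix c
    show "gact HZ ?N ?N \<pi> (gpow HZ one_minus_one k) c = gpow HZ one_minus_one k c"
    proof (cases "1 \<le> c \<and> c \<le> ?N")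
      case False then show ?thesis by (auto simp: tpow)
    next
      case True
      then obtain x0 where x0: "x0 \<in> {1..?N}" "\<pi> x0 = c" using bij unfolding bij_betw_def by (metis atLeastAtMost_iff imageE)
      have "{i. 1 \<le> i \<and> i \<le> ?N \<and> \<pi> i = c} = {x0}"
        using x0 bij unfolding bij_betw_def inj_on_def by auto
      then have "gact HZ ?N ?N \<pi> (gpow HZ one_minus_one k) c = sg x0" using True x0 by (simp add: tpow)
      also have "\<dots> = sg c" using sg_Apos[of x0 k] sg_Apos[of c k] x0 pres True by auto
      finally show ?thesis using True by (simp add: tpow)
    qed
  qed
next
  fix k i j l :: nat
  assume k: "1 \<le> k" and ijl: "1 \<le> i \<and> i < j \<and> j \<le> 2 ^ k \<and> (i \<in> Apos k \<longleftrightarrow> j \<notin> Apos k) \<and> 1 \<le> l \<and> l \<le> 2 ^ k - 1"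
  let ?N = "2 ^ k :: nat"
  let ?X = "gpow HZ one_minus_one k"
  let ?s = "sfold ?N i j l"
  let ?d = "dinj (?N - 1) l \<circ> proj (?N - 1) i \<circ> proj ?N j"
  have e2: "?N - 1 - 1 = ?N - 2" by simp
  have ile: "1 \<le> i" "i \<le> ?N - 1" using ijl by linarith+
  have pi: "ptd_map (?N - 1) (?N - 2) (proj (?N - 1) i)" using ptd_proj[OF ile] unfolding e2 .
  have pd: "ptd_map (?N - 2) (?N - 1) (dinj (?N - 1) l)" using ijl ptd_dinj[of l "?N - 1"] unfolding e2 by auto
  have pj: "ptd_map ?N (?N - 1) (proj ?N j)" using ijl by (intro ptd_proj) auto
  have R: "gact HZ (?N - 2) (?N - 1) (dinj (?N - 1) l) (gact HZ (?N - 1) (?N - 2) (proj (?N - 1) i) (gact HZ ?N (?N - 1) (proj ?N j) ?X))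
      = gact HZ ?N (?N - 1) ?d ?X"
    using HZ_comp[OF pj pi] HZ_comp[OF ptd_comp[OF pj pi] pd] by (simp only: comp_assoc)
  have "gact HZ ?N (?N - 1) ?s ?X = gact HZ ?N (?N - 1) ?d ?X"
  proof
    fix c
    show "gact HZ ?N (?N - 1) ?s ?X c = gact HZ ?N (?N - 1) ?d ?X c"
    proof (cases "1 \<le> c \<and> c \<le> ?N - 1")
      case False then show ?thesis by auto
    next
      case True
      show ?thesis
      proof (cases "c = l")
        case cl: True
        have s1: "{x. 1 \<le> x \<and> x \<le> ?N \<and> ?s x = c} = {i, j}"
        proof -
          have "?s x = l \<longleftrightarrow> x = i \<or> x = j" if "1 \<le> x" "x \<le> ?N" for x
          proof (cases "x = i \<or> x = j")
            case True then show ?thesis using sd_ab[of i j ?N l] ijl by auto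
          next
            case False
            then show ?thesis using sd_agree[of i j ?N l x] sd_nl[of l ?N] ijl by auto
          qed
          then show ?thesis using cl ijl by auto
        qed
        have s2: "{x. 1 \<le> x \<and> x \<le> ?N \<and> ?d x = c} = {}" using sd_nl[of l ?N] ijl cl by auto
        have "sg i + sg j = 0" using sg_Apos[of i k] sg_Apos[of j k] ijl by auto
        moreover have "i \<noteq> j" using ijl by simp
        ultimately have "(\<Sum>x\<in>{i, j}. ?X x) = 0" using ijl by (simp add: tpow)
        then show ?thesis unfolding HZ_act_at[of c "?N - 1", OF conjunct1[OF True] conjunct2[OF True]] s1 s2 by simp
      next
        case cnl: False
        have "{x. 1 \<le> x \<and> x \<le> ?N \<and> ?s x = c} = {x. 1 \<le> x \<and> x \<le> ?N \<and> ?d x = c}"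
        proof -
          have "?s x = ?d x \<or> (x \<in> {i, j} \<and> ?s x = l \<and> ?d x = 0)" for x
            using sd_agree[of i j ?N l x] sd_ab[of i j ?N l] ijl by auto
          then show ?thesis using cnl True by (metis (mono_tags, lifting) not_one_le_zero)
        qed
        then show ?thesis by simp
      qed
    qed
  qed
  then show "gact HZ ?N (?N - 1) ?s ?X = gact HZ (?N - 2) (?N - 1) (dinj (?N - 1) l) (gact HZ (?N - 1) (?N - 2) (proj (?N - 1) i) (gact HZ ?N (?N - 1) (proj ?N j) ?X))"
    using R by simp
qed


lemma perm_fib:
  fixes f g :: "'a \<Rightarrow> nat"
  assumes A: "finite A" and fA: "\<forall>x\<in>A. f x \<le> n" and gA: "\<forall>x\<in>A. g x \<le> n"
    and cards: "\<And>c. 1 \<le> c \<Longrightarrow> card {x\<in>A. f x = c} = card {x\<in>A. g x = c}"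
  shows "\<exists>\<pi>. bij_betw \<pi> A A \<and> (\<forall>x\<in>A. f (\<pi> x) = g x)"
proof -
  have tot: "card A = (\<Sum>c\<in>{0..n}. card {x\<in>A. h x = c})" if "\<forall>x\<in>A. h x \<le> n" for h :: "'a \<Rightarrow> nat"
  proof -
    have "(\<Sum>c\<in>{0..n}. card {x\<in>A. h x = c}) = (\<Sum>c\<in>{0..n}. \<Sum>x\<in>{x\<in>A. h x = c}. (1::nat))" by simp
    also have "\<dots> = (\<Sum>x\<in>A. 1)" by (rule sum.group) (use A that in auto)
    finally show ?thesis by simp
  qed
  have s1: "(\<Sum>c\<in>{1..n}. card {x\<in>A. f x = c}) = (\<Sum>c\<in>{1..n}. card {x\<in>A. g x = c})"
    using cards by (intro sum.cong) auto
  have split: "(\<Sum>c\<in>{0..n}. card {x\<in>A. h x = c}) = card {x\<in>A. h x = 0} + (\<Sum>c\<in>{1..n}. card {x\<in>A. h x = c})" for h :: "'a \<Rightarrow> nat"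
  proof -
    have "{0..n} = insert 0 {1..n}" by auto
    then show ?thesis by simp
  qed
  have c0: "card {x\<in>A. f x = 0} = card {x\<in>A. g x = 0}"
    using tot[OF fA] tot[OF gA] split[of f] split[of g] s1 by linarith
  have allc: "card {x\<in>A. g x = c} = card {x\<in>A. f x = c}" for c
  proof (cases "c = 0")
    case True then show ?thesis using c0 by simp
  next
    case False then show ?thesis using cards[of c] by simp
  qed
  have "\<exists>\<beta>. bij_betw \<beta> {x\<in>A. g x = c} {x\<in>A. f x = c}" for c
    by (rule finite_same_card_bij) (use A allc in auto)
  then obtain \<beta> where \<beta>: "\<And>c. bij_betw (\<beta> c) {x\<in>A. g x = c} {x\<in>A. f x = c}" by metis
  define \<pi> where "\<pi> x = \<beta> (g x) x" for x
  have img: "\<pi> x \<in> A \<and> f (\<pi> x) = g x" if "x \<in> A" for x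
    using \<beta>[of "g x"] that unfolding \<pi>_def bij_betw_def by auto
  have inj: "inj_on \<pi> A"
  proof
    fix x y assume xy: "x \<in> A" "y \<in> A" "\<pi> x = \<pi> y"
    then have "g x = g y" using img by metis
    then show "x = y" using xy \<beta>[of "g x"] unfolding bij_betw_def inj_on_def \<pi>_def by auto
  qed
  have surj: "\<pi> ` A = A"
  proof
    show "\<pi> ` A \<subseteq> A" using img by auto
    show "A \<subseteq> \<pi> ` A"
    proof
      fix y assume y: "y \<in> A"
      then have "y \<in> \<beta> (f y) ` {x\<in>A. g x = f y}" using \<beta>[of "f y"] unfolding bij_betw_def by auto
      then obtain x where x: "x \<in> A" "g x = f y" "y = \<beta> (f y) x" by auto
      then have "\<pi> x = y" unfolding \<pi>_def by simp
      then show "y \<in> \<pi> ` A" using x(1) by (metis imageI)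
    qed
  qed
  show ?thesis using inj surj img unfolding bij_betw_def by blast
qed


definition eskip :: "nat \<Rightarrow> nat \<Rightarrow> nat \<Rightarrow> nat" where
  "eskip a b z = (if z < a then z else if z + 1 < b then z + 1 else z + 2)"

lemma s1_inv:
  assumes "1 \<le> a" "a < b" "b \<le> N" "1 \<le> x" "x \<le> N" "x \<noteq> a" "x \<noteq> b"
  shows "2 \<le> sfold N a b 1 x" "sfold N a b 1 x \<le> N - 1" "eskip a b (sfold N a b 1 x - 1) = x"
proof -
  consider "x < a" | "a < x \<and> x < b" | "b < x" using assms by linarith
  then have "2 \<le> sfold N a b 1 x \<and> sfold N a b 1 x \<le> N - 1 \<and> eskip a b (sfold N a b 1 x - 1) = x"
  proof cases
    case 1 then show ?thesis using assms unfolding sfold_def eskip_def Let_def by auto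
  next
    case 2 then show ?thesis using assms unfolding sfold_def eskip_def Let_def by auto
  next
    case 3 then show ?thesis using assms unfolding sfold_def eskip_def Let_def by auto
  qed
  then show "2 \<le> sfold N a b 1 x" "sfold N a b 1 x \<le> N - 1" "eskip a b (sfold N a b 1 x - 1) = x" by auto
qed


locale dgr =
  fixes R :: "'a gring"
  assumes R: "discrete_gamma_ring R"
begin

lemma dg_comp: "ptd_map n m f \<Longrightarrow> ptd_map m k g \<Longrightarrow> x \<in> gcar R n \<Longrightarrow>
    gact R n k (g \<circ> f) x = gact R m k g (gact R n m f x)"
  using R unfolding discrete_gamma_ring_def by auto

lemma dg_act_car: "ptd_map n m f \<Longrightarrow> x \<in> gcar R n \<Longrightarrow> gact R n m f x \<in> gcar R m"
  using R unfolding discrete_gamma_ring_def by auto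

lemma dg_mul_car: "x \<in> gcar R n \<Longrightarrow> y \<in> gcar R m \<Longrightarrow> gmul R n m x y \<in> gcar R (n * m)"
  using R unfolding discrete_gamma_ring_def by auto

lemma dg_nat: "ptd_map n n' f \<Longrightarrow> ptd_map m m' g \<Longrightarrow> x \<in> gcar R n \<Longrightarrow> y \<in> gcar R m \<Longrightarrow>
         gmul R n' m' (gact R n n' f x) (gact R m m' g y)
           = gact R (n * m) (n' * m') (smash_map n n' f m g) (gmul R n m x y)"
  using R unfolding discrete_gamma_ring_def by auto

lemma dg_assoc: "x \<in> gcar R n \<Longrightarrow> y \<in> gcar R m \<Longrightarrow> z \<in> gcar R k \<Longrightarrow>
         gmul R (n * m) k (gmul R n m x y) z = gmul R n (m * k) x (gmul R m k y z)"
  using R unfolding discrete_gamma_ring_def by auto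

lemma dg_unit: "x \<in> gcar R n \<Longrightarrow> gmul R 1 n (gone R) x = x" "x \<in> gcar R n \<Longrightarrow> gmul R n 1 x (gone R) = x"
  using R unfolding discrete_gamma_ring_def by auto

lemma dg_one: "gone R \<in> gcar R 1"
  using R unfolding discrete_gamma_ring_def by auto

lemma dg_id: "x \<in> gcar R n \<Longrightarrow> gact R n n (idp n) x = x"
  using R unfolding discrete_gamma_ring_def by auto

lemma dg_base: "ptd_map n m f \<Longrightarrow> gact R n m f (gbase R n) = gbase R m"
  using R unfolding discrete_gamma_ring_def by auto

lemma dg_car0: "gcar R 0 = {gbase R 0}"
  using R unfolding discrete_gamma_ring_def by auto

lemma dg_closed: "gr_closed R" using disc_closed[OF R] .

end

locale fdl = dgr +
  fixes r assumes F: "formal_difference_law R r"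
begin

lemma r_car: "r \<in> gcar R 2" using F unfolding formal_difference_law_def by blast

lemma X_car: "gpow R r k \<in> gcar R (2 ^ k)" using gpow_car[OF dg_closed r_car] .

lemma cancel:
  assumes k: "1 \<le> k" and f: "ptd_map (2 ^ k) n f"
    and a: "1 \<le> a" and ab: "a < b" and b: "b \<le> 2 ^ k" and opp: "a \<in> Apos k \<longleftrightarrow> b \<notin> Apos k"
    and eq: "f a = f b"
  shows "gact R (2 ^ k) n f (gpow R r k) = gact R (2 ^ k) n (f(a := 0, b := 0)) (gpow R r k)"
proof -
  let ?N = "2 ^ k :: nat"
  let ?X = "gpow R r k"
  have N2: "2 \<le> ?N" using k by (metis one_le_numeral power_increasing power_one_right)
  define s where "s = sfold ?N a b 1"
  define f' where "f' y = (if y = 1 then f a else if 2 \<le> y \<and> y \<le> ?N - 1 then f (eskip a b (y - 1)) else 0)" for y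
  have fx: "f x \<le> n" for x using f unfolding ptd_map_def by (cases "x \<le> ?N") auto
  have pf': "ptd_map (?N - 1) n f'" unfolding ptd_map_def f'_def using fx N2 by auto
  have ps: "ptd_map ?N (?N - 1) s" unfolding s_def using a ab b N2 by (intro ptd_sfold) auto
  have f0: "f 0 = 0" "\<And>x. x > ?N \<Longrightarrow> f x = 0" using f unfolding ptd_map_def by auto
  have fs: "f' \<circ> s = f"
  proof
    fix x
    show "(f' \<circ> s) x = f x"
    proof (cases "x = a \<or> x = b")
      case True
      then have "s x = 1" unfolding s_def using sd_ab[of a b ?N 1] a ab b by auto
      then show ?thesis using True eq unfolding f'_def by auto
    next
      case nab: False
      show ?thesis
      proof (cases "1 \<le> x \<and> x \<le> ?N")
        case True
        then show ?thesis using s1_inv[of a b ?N x] nab a ab b unfolding f'_def s_def by auto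
      next
        case False
        then have "s x = 0" unfolding s_def sfold_def by auto
        moreover have "f x = 0" using False f0 by (cases "x = 0") auto
        ultimately show ?thesis unfolding f'_def by simp
      qed
    qed
  qed
  define d where "d = dinj (?N - 1) 1"
  define pa where "pa = proj (?N - 1) a"
  define pb where "pb = proj ?N b"
  have fd: "((f' \<circ> d) \<circ> pa) \<circ> pb = f(a := 0, b := 0)"
  proof
    fix x
    show "(((f' \<circ> d) \<circ> pa) \<circ> pb) x = (f(a := 0, b := 0)) x"
    proof (cases "x = a \<or> x = b")
      case True
      then show ?thesis using sd_ab[of a b ?N 1] a ab b unfolding d_def pa_def pb_def f'_def by auto
    next
      case False
      then have "d (pa (pb x)) = s x" using sd_agree[of a b ?N 1 x] a ab b N2 unfolding d_def pa_def pb_def s_def by auto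
      then show ?thesis using False fun_cong[OF fs, of x] by auto
    qed
  qed
  have e2: "?N - 1 - 1 = ?N - 2" by simp
  have ile: "1 \<le> a" "a \<le> ?N - 1" using a ab b by linarith+
  have ppa: "ptd_map (?N - 1) (?N - 2) pa" using ptd_proj[OF ile] unfolding e2 pa_def .
  have pd: "ptd_map (?N - 2) (?N - 1) d" using ptd_dinj[of 1 "?N - 1"] unfolding e2 d_def by auto
  have ppb: "ptd_map ?N (?N - 1) pb" unfolding pb_def using ab b by (intro ptd_proj) auto
  have E: "gact R ?N (?N - 1) s ?X = gact R (?N - 2) (?N - 1) d (gact R (?N - 1) (?N - 2) pa (gact R ?N (?N - 1) pb ?X))"
    using F k a ab b opp N2 unfolding formal_difference_law_def s_def d_def pa_def pb_def by auto
  have X1: "gact R ?N (?N - 1) pb ?X \<in> gcar R (?N - 1)" using dg_act_car[OF ppb X_car] .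
  have X2: "gact R (?N - 1) (?N - 2) pa (gact R ?N (?N - 1) pb ?X) \<in> gcar R (?N - 2)" using dg_act_car[OF ppa X1] .
  have "gact R ?N n f ?X = gact R ?N n (f' \<circ> s) ?X" using fs by simp
  also have "\<dots> = gact R (?N - 1) n f' (gact R ?N (?N - 1) s ?X)" using dg_comp[OF ps pf' X_car] .
  also have "\<dots> = gact R (?N - 1) n f' (gact R (?N - 2) (?N - 1) d (gact R (?N - 1) (?N - 2) pa (gact R ?N (?N - 1) pb ?X)))"
    using E by simp
  also have "\<dots> = gact R (?N - 2) n (f' \<circ> d) (gact R (?N - 1) (?N - 2) pa (gact R ?N (?N - 1) pb ?X))"
    using dg_comp[OF pd pf' X2] by simp
  also have "\<dots> = gact R (?N - 1) n ((f' \<circ> d) \<circ> pa) (gact R ?N (?N - 1) pb ?X)"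
    using dg_comp[OF ppa ptd_comp[OF pd pf'] X1] by simp
  also have "\<dots> = gact R ?N n (((f' \<circ> d) \<circ> pa) \<circ> pb) ?X"
    using dg_comp[OF ppb ptd_comp[OF ppa ptd_comp[OF pd pf']] X_car] by simp
  also have "\<dots> = gact R ?N n (f(a := 0, b := 0)) ?X" using fd by simp
  finally show ?thesis .
qed

end


definition ssum :: "nat \<Rightarrow> (nat \<Rightarrow> nat) \<Rightarrow> nat \<Rightarrow> int" where
  "ssum N f c = (\<Sum>i\<in>{i. 1 \<le> i \<and> i \<le> N \<and> f i = c}. sg i)"

definition reduced :: "nat \<Rightarrow> (nat \<Rightarrow> nat) \<Rightarrow> bool" where
  "reduced N f \<longleftrightarrow> (\<forall>i j. 1 \<le> i \<longrightarrow> i \<le> N \<longrightarrow> 1 \<le> j \<longrightarrow> j \<le> N \<longrightarrow> f i = f j \<longrightarrow> f i \<noteq> 0 \<longrightarrow> sg i = sg j)"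

definition supp :: "nat \<Rightarrow> (nat \<Rightarrow> nat) \<Rightarrow> nat set" where
  "supp N f = {i. 1 \<le> i \<and> i \<le> N \<and> f i \<noteq> 0}"

lemma sg_pm: "sg i = 1 \<or> sg i = -1" unfolding sg_def by auto

lemma fin_fib[simp]: "finite {i. 1 \<le> i \<and> i \<le> (N::nat) \<and> P i}"
  by (rule finite_subset[of _ "{..N}"]) auto

lemma ssum_cancel:
  assumes "1 \<le> a" "a < b" "b \<le> N" "sg a + sg b = 0" "f a = f b" "c \<noteq> 0"
  shows "ssum N (f(a := 0, b := 0)) c = ssum N f c"
proof (cases "c = f a")
  case True
  let ?S = "{i. 1 \<le> i \<and> i \<le> N \<and> f i = c}"
  have S': "{i. 1 \<le> i \<and> i \<le> N \<and> (f(a := 0, b := 0)) i = c} = ?S - {a, b}" using assms by auto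
  have S: "?S = insert a (insert b (?S - {a, b}))" using assms True by auto
  have "ssum N f c = sg a + (sg b + (\<Sum>i\<in>?S - {a, b}. sg i))"
    unfolding ssum_def by (subst S) (use assms in simp)
  then show ?thesis unfolding ssum_def S' using assms by simp
next
  case False
  have "{i. 1 \<le> i \<and> i \<le> N \<and> (f(a := 0, b := 0)) i = c} = {i. 1 \<le> i \<and> i \<le> N \<and> f i = c}"
    using assms False by auto
  then show ?thesis unfolding ssum_def by simp
qed

lemma red_card:
  assumes red: "reduced N f" and c: "c \<noteq> 0" and s: "s = 1 \<or> s = -1"
  shows "card {x \<in> {i. 1 \<le> i \<and> i \<le> N \<and> sg i = s}. f x = c} = nat (s * ssum N f c)"
proof -
  let ?F = "{i. 1 \<le> i \<and> i \<le> N \<and> f i = c}"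
  have eqF: "{x \<in> {i. 1 \<le> i \<and> i \<le> N \<and> sg i = s}. f x = c} = {x \<in> ?F. sg x = s}" by auto
  show ?thesis
  proof (cases "?F = {}")
    case True
    have e1: "{x \<in> ?F. sg x = s} = {}" using True by blast
    have "ssum N f c = 0" unfolding ssum_def True by (rule sum.empty)
    then show ?thesis unfolding eqF e1 by simp
  next
    case False
    then obtain i0 where i0: "i0 \<in> ?F" by blast
    have same: "\<forall>i\<in>?F. sg i = sg i0"
    proof
      fix i assume i: "i \<in> ?F"
      have "f i = f i0" "f i \<noteq> 0" "1 \<le> i" "i \<le> N" "1 \<le> i0" "i0 \<le> N" using i i0 c by auto
      then show "sg i = sg i0" using red unfolding reduced_def by blast
    qed
    have ss: "ssum N f c = of_nat (card ?F) * sg i0"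
      unfolding ssum_def using sum.cong[OF refl, of ?F sg "\<lambda>_. sg i0"] same by simp
    show ?thesis
    proof (cases "sg i0 = s")
      case True
      then have A: "{x \<in> ?F. sg x = s} = ?F" using same by auto
      have "s * s = 1" using s by auto
      have H: "s * (of_nat (card ?F) * sg i0) = of_nat (card ?F)"
      proof -
        have "s * (of_nat (card ?F) * sg i0) = of_nat (card ?F) * (s * sg i0)" by (simp only: mult.left_commute)
        then show ?thesis using True \<open>s * s = 1\<close> by simp
      qed
      show ?thesis unfolding eqF ss H A by simp
    next
      case False
      then have A: "{x \<in> ?F. sg x = s} = {}" using same by auto
      have "s * sg i0 = -1" using s sg_pm[of i0] False by auto
      have H: "s * (of_nat (card ?F) * sg i0) = - of_nat (card ?F)"
      proof -
        have "s * (of_nat (card ?F) * sg i0) = of_nat (card ?F) * (s * sg i0)" by (simp only: mult.left_commute)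
        then show ?thesis using \<open>s * sg i0 = -1\<close> by simp
      qed
      show ?thesis unfolding eqF ss H A by simp
    qed
  qed
qed

context fdl
begin

lemma F_perm:
  assumes "1 \<le> k" "special_perm k \<pi>"
  shows "gact R (2 ^ k) (2 ^ k) \<pi> (gpow R r k) = gpow R r k"
proof -
  have A: "\<forall>k\<ge>1. \<forall>\<pi>. special_perm k \<pi> \<longrightarrow> gact R (2 ^ k) (2 ^ k) \<pi> (gpow R r k) = gpow R r k"
    by (rule F[unfolded formal_difference_law_def, THEN conjunct2, THEN conjunct2, THEN conjunct2, THEN conjunct2, THEN conjunct2, THEN conjunct1])
  show ?thesis using A assms by simp
qed

lemma F_p22: "gact R 2 1 (proj 2 2) r = gone R"
  using F[unfolded formal_difference_law_def, THEN conjunct2, THEN conjunct1] .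

lemma reduce:
  assumes k: "1 \<le> k" and f: "ptd_map (2 ^ k) n f"
  shows "\<exists>g. ptd_map (2 ^ k) n g \<and> gact R (2 ^ k) n g (gpow R r k) = gact R (2 ^ k) n f (gpow R r k)
     \<and> (\<forall>c. c \<noteq> 0 \<longrightarrow> ssum (2 ^ k) g c = ssum (2 ^ k) f c) \<and> reduced (2 ^ k) g"
  using f
proof (induction "card (supp (2 ^ k) f)" arbitrary: f rule: less_induct)
  case less
  let ?N = "2 ^ k :: nat"
  show ?case
  proof (cases "reduced ?N f")
    case True then show ?thesis by (intro exI[of _ f] conjI) (simp_all add: less.prems)
  next
    case False
    then obtain i j where ij: "1 \<le> i" "i \<le> ?N" "1 \<le> j" "j \<le> ?N" "f i = f j" "f i \<noteq> 0" "sg i \<noteq> sg j"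
      unfolding reduced_def by blast
    have "i \<noteq> j" using ij by auto
    define a where "a = min i j"
    define b where "b = max i j"
    have ab: "1 \<le> a \<and> a < b \<and> b \<le> ?N \<and> f a = f b \<and> f a \<noteq> 0 \<and> sg a \<noteq> sg b"
    proof (cases "i < j")
      case True
      then have "a = i" "b = j" unfolding a_def b_def by simp_all
      then show ?thesis using ij True by simp
    next
      case False
      then have "j < i" using \<open>i \<noteq> j\<close> by simp
      then have "a = j" "b = i" unfolding a_def b_def by simp_all
      then show ?thesis using ij \<open>j < i\<close> by simp
    qed
    then have ab: "1 \<le> a" "a < b" "b \<le> ?N" "f a = f b" "f a \<noteq> 0" "sg a \<noteq> sg b" by simp_all
    have sab: "sg a + sg b = 0" using sg_pm[of a] sg_pm[of b] ab by auto
    have sa: "sg a = (if a \<in> Apos k then 1 else -1)" using sg_Apos[of a k] ab by simp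
    have sb: "sg b = (if b \<in> Apos k then 1 else -1)" using sg_Apos[of b k] ab by simp
    have opp: "a \<in> Apos k \<longleftrightarrow> b \<notin> Apos k"
    proof
      assume "a \<in> Apos k" then show "b \<notin> Apos k" using sa sb ab(6) by auto
    next
      assume "b \<notin> Apos k" then show "a \<in> Apos k" using sa sb ab(6) by (cases "a \<in> Apos k") auto
    qed
    define f' where "f' = f(a := 0, b := 0)"
    have pf': "ptd_map ?N n f'"
    proof -
      have pf: "f 0 = 0" "\<forall>i\<le>?N. f i \<le> n" "\<forall>i>?N. f i = 0" using less.prems unfolding ptd_map_def by auto
      have "f' 0 = 0" using pf(1) ab(1,2) unfolding f'_def by simp
      moreover have "\<forall>i\<le>?N. f' i \<le> n" using pf(2) unfolding f'_def by simp
      moreover have "\<forall>i>?N. f' i = 0" using pf(3) ab(3) unfolding f'_def by simp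
      ultimately show ?thesis unfolding ptd_map_def by blast
    qed
    have val: "gact R ?N n f' (gpow R r k) = gact R ?N n f (gpow R r k)"
      unfolding f'_def using cancel[OF k less.prems ab(1,2,3) opp ab(4)] by (rule sym)
    have ss: "\<forall>c. c \<noteq> 0 \<longrightarrow> ssum ?N f' c = ssum ?N f c"
    proof (intro allI impI)
      fix c :: nat assume "c \<noteq> 0"
      then show "ssum ?N f' c = ssum ?N f c" unfolding f'_def by (rule ssum_cancel[OF ab(1,2,3) sab ab(4)])
    qed
    have s1: "supp ?N f' = supp ?N f - {a, b}" unfolding supp_def f'_def by auto
    have s2: "a \<in> supp ?N f" unfolding supp_def using ab by auto
    have "supp ?N f' \<subset> supp ?N f" unfolding s1 using s2 by blast
    then have "card (supp ?N f') < card (supp ?N f)"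
      by (rule psubset_card_mono[rotated]) (simp add: supp_def)
    from less.hyps[OF this pf'] obtain g where g: "ptd_map ?N n g" "gact R ?N n g (gpow R r k) = gact R ?N n f' (gpow R r k)"
      "\<forall>c. c \<noteq> 0 \<longrightarrow> ssum ?N g c = ssum ?N f' c" "reduced ?N g" by blast
    show ?thesis
    proof (intro exI[of _ g] conjI allI impI)
      show "ptd_map ?N n g" by (rule g(1))
      show "gact R ?N n g (gpow R r k) = gact R ?N n f (gpow R r k)" using g(2) val by (rule trans)
      show "reduced ?N g" by (rule g(4))
      fix c :: nat assume "c \<noteq> 0"
      then show "ssum ?N g c = ssum ?N f c" using g(3) ss by simp
    qed
  qed
qed

lemma perm_equal:
  assumes k: "1 \<le> k" and f: "ptd_map (2 ^ k) n f" and g: "ptd_map (2 ^ k) n g"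
    and rf: "reduced (2 ^ k) f" and rg: "reduced (2 ^ k) g"
    and ss: "\<forall>c. c \<noteq> 0 \<longrightarrow> ssum (2 ^ k) f c = ssum (2 ^ k) g c"
  shows "gact R (2 ^ k) n f (gpow R r k) = gact R (2 ^ k) n g (gpow R r k)"
proof -
  let ?N = "2 ^ k :: nat"
  define P where "P = {i. 1 \<le> i \<and> i \<le> ?N \<and> sg i = 1}"
  define M where "M = {i. 1 \<le> i \<and> i \<le> ?N \<and> sg i = -1}"
  have fb1: "f x \<le> n" for x using f unfolding ptd_map_def by (cases "x \<le> ?N") auto
  have fb2: "g x \<le> n" for x using g unfolding ptd_map_def by (cases "x \<le> ?N") auto
  have fP: "finite P" "finite M" unfolding P_def M_def by simp_all
  have cP: "card {x \<in> P. f x = c} = card {x \<in> P. g x = c}" if "1 \<le> c" for c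
  proof -
    have "c \<noteq> 0" using that by simp
    then show ?thesis unfolding P_def using red_card[OF rf, of c 1] red_card[OF rg, of c 1] ss by simp
  qed
  have cM: "card {x \<in> M. f x = c} = card {x \<in> M. g x = c}" if "1 \<le> c" for c
  proof -
    have "c \<noteq> 0" using that by simp
    then show ?thesis unfolding M_def using red_card[OF rf, of c "-1"] red_card[OF rg, of c "-1"] ss by simp
  qed
  have "\<exists>\<pi>. bij_betw \<pi> P P \<and> (\<forall>x\<in>P. f (\<pi> x) = g x)"
    by (rule perm_fib[of P f n g, OF fP(1) _ _ cP]) (simp_all add: fb1 fb2)
  then obtain \<pi>P where \<pi>P: "bij_betw \<pi>P P P" "\<forall>x\<in>P. f (\<pi>P x) = g x" by blast
  have "\<exists>\<pi>. bij_betw \<pi> M M \<and> (\<forall>x\<in>M. f (\<pi> x) = g x)"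
    by (rule perm_fib[of M f n g, OF fP(2) _ _ cM]) (simp_all add: fb1 fb2)
  then obtain \<pi>M where \<pi>M: "bij_betw \<pi>M M M" "\<forall>x\<in>M. f (\<pi>M x) = g x" by blast
  define \<pi> where "\<pi> x = (if x \<in> P then \<pi>P x else if x \<in> M then \<pi>M x else 0)" for x
  have PM: "{1..?N} = P \<union> M" "P \<inter> M = {}" unfolding P_def M_def using sg_pm by auto
  have bP: "bij_betw \<pi> P P" using \<pi>P(1) by (rule bij_betw_cong[THEN iffD1, rotated]) (simp add: \<pi>_def)
  have bM: "bij_betw \<pi> M M" using \<pi>M(1) by (rule bij_betw_cong[THEN iffD1, rotated]) (use PM in \<open>auto simp: \<pi>_def\<close>)
  have bij: "bij_betw \<pi> {1..?N} {1..?N}" unfolding PM(1) using bij_betw_combine[OF bP bM PM(2)] .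
  have PA: "Apos k = P" unfolding Apos_def P_def sg_def by auto
  have ptd: "ptd_map ?N ?N \<pi>"
  proof -
    have "\<pi> x \<in> {1..?N}" if "x \<in> {1..?N}" for x using bij that unfolding bij_betw_def by auto
    moreover have "\<pi> x = 0" if "x \<notin> {1..?N}" for x using that PM unfolding \<pi>_def by auto
    ultimately show ?thesis unfolding ptd_map_def
    proof (intro conjI allI impI)
      show "\<pi> 0 = 0" using \<open>\<And>x. x \<notin> {1..?N} \<Longrightarrow> \<pi> x = 0\<close> by simp
    next
      fix i :: nat assume "i \<le> ?N"
      then show "\<pi> i \<le> ?N" using \<open>\<And>x. x \<in> {1..?N} \<Longrightarrow> \<pi> x \<in> {1..?N}\<close> \<open>\<And>x. x \<notin> {1..?N} \<Longrightarrow> \<pi> x = 0\<close>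
        by (cases "i \<in> {1..?N}") auto
    next
      fix i :: nat assume "?N < i"
      then show "\<pi> i = 0" using \<open>\<And>x. x \<notin> {1..?N} \<Longrightarrow> \<pi> x = 0\<close> by simp
    qed
  qed
  have pres: "\<forall>i\<in>{1..?N}. \<pi> i \<in> Apos k \<longleftrightarrow> i \<in> Apos k"
    unfolding PA using bP bM PM unfolding bij_betw_def by auto
  have sp: "special_perm k \<pi>" unfolding special_perm_def using ptd bij pres by blast
  have inv: "gact R ?N ?N \<pi> (gpow R r k) = gpow R r k" using F_perm[OF k sp] .
  have gf: "g = f \<circ> \<pi>"
  proof
    fix x
    show "g x = (f \<circ> \<pi>) x"
    proof (cases "x \<in> P \<or> x \<in> M")
      case True then show ?thesis using \<pi>P(2) \<pi>M(2) PM unfolding \<pi>_def by auto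
    next
      case False
      then have "x \<notin> {1..?N}" using PM by auto
      then have "g x = 0" using g unfolding ptd_map_def by (cases "x = 0") auto
      moreover have "f 0 = 0" using f unfolding ptd_map_def by auto
      ultimately show ?thesis using False unfolding \<pi>_def by auto
    qed
  qed
  have "gact R ?N n g (gpow R r k) = gact R ?N n f (gact R ?N ?N \<pi> (gpow R r k))"
    unfolding gf using dg_comp[OF ptd f X_car] .
  then show ?thesis using inv by simp
qed

lemma wd_level:
  assumes k: "1 \<le> k" and f: "ptd_map (2 ^ k) n f" and g: "ptd_map (2 ^ k) n g"
    and ss: "\<forall>c. c \<noteq> 0 \<longrightarrow> ssum (2 ^ k) f c = ssum (2 ^ k) g c"
  shows "gact R (2 ^ k) n f (gpow R r k) = gact R (2 ^ k) n g (gpow R r k)"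
proof -
  obtain f1 where f1: "ptd_map (2 ^ k) n f1" "gact R (2 ^ k) n f1 (gpow R r k) = gact R (2 ^ k) n f (gpow R r k)"
     "\<forall>c. c \<noteq> 0 \<longrightarrow> ssum (2 ^ k) f1 c = ssum (2 ^ k) f c" "reduced (2 ^ k) f1"
    using reduce[OF k f] by blast
  obtain g1 where g1: "ptd_map (2 ^ k) n g1" "gact R (2 ^ k) n g1 (gpow R r k) = gact R (2 ^ k) n g (gpow R r k)"
     "\<forall>c. c \<noteq> 0 \<longrightarrow> ssum (2 ^ k) g1 c = ssum (2 ^ k) g c" "reduced (2 ^ k) g1"
    using reduce[OF k g] by blast
  have "gact R (2 ^ k) n f1 (gpow R r k) = gact R (2 ^ k) n g1 (gpow R r k)"
    using perm_equal[OF k f1(1) g1(1) f1(4) g1(4)] f1(3) g1(3) ss by simp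
  then show ?thesis using f1(2) g1(2) by simp
qed

end


lemma smash_p22:
  assumes f: "ptd_map (2 ^ k) n f"
  shows "smash_map (2 ^ k) n f 2 (proj 2 2) = f"
proof
  fix x
  have f0: "f 0 = 0" "\<And>x. x > 2 ^ k \<Longrightarrow> f x = 0" using f unfolding ptd_map_def by auto
  show "smash_map (2 ^ k) n f 2 (proj 2 2) x = f x"
  proof (cases "1 \<le> x \<and> x \<le> 2 ^ k * 2")
    case False
    then have "x = 0 \<or> x > 2 ^ k" by auto
    then show ?thesis using False f0 unfolding smash_map_def by auto
  next
    case True
    show ?thesis
    proof (cases "x \<le> 2 ^ k")
      case le: True
      then have "(x - 1) mod 2 ^ k + 1 = x" "(x - 1) div 2 ^ k + 1 = 1" using True by auto
      then show ?thesis using True le unfolding smash_map_def Let_def proj_def by auto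
    next
      case gt: False
      then have "(x - 1) div 2 ^ k + 1 = 2"
      proof -
        have "2 ^ k \<le> x - 1" "x - 1 < 2 ^ k * 2" using gt True by auto
        then have "(x - 1) div 2 ^ k = 1" by (intro div_nat_eqI) auto
        then show ?thesis by simp
      qed
      then show ?thesis using True gt f0 unfolding smash_map_def Let_def proj_def by auto
    qed
  qed
qed

context fdl
begin

lemma lift1:
  assumes f: "ptd_map (2 ^ k) n f"
  shows "gact R (2 ^ Suc k) n f (gpow R r (Suc k)) = gact R (2 ^ k) n f (gpow R r k)"
proof -
  have p22: "ptd_map 2 1 (proj 2 2)" using ptd_proj[of 2 2] by simp
  have "gmul R n 1 (gact R (2 ^ k) n f (gpow R r k)) (gact R 2 1 (proj 2 2) r)
      = gact R (2 ^ k * 2) (n * 1) (smash_map (2 ^ k) n f 2 (proj 2 2)) (gmul R (2 ^ k) 2 (gpow R r k) r)"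
    by (rule dg_nat[OF f p22 X_car r_car])
  moreover have "gmul R n 1 (gact R (2 ^ k) n f (gpow R r k)) (gact R 2 1 (proj 2 2) r) = gact R (2 ^ k) n f (gpow R r k)"
    unfolding F_p22 using dg_unit(2)[OF dg_act_car[OF f X_car]] .
  ultimately show ?thesis unfolding smash_p22[OF f] by (simp add: mult.commute)
qed

lemma lift:
  assumes f: "ptd_map (2 ^ k) n f" and km: "k \<le> m"
  shows "gact R (2 ^ m) n f (gpow R r m) = gact R (2 ^ k) n f (gpow R r k)"
  using km
proof (induction m)
  case 0 then show ?case by simp
next
  case (Suc m)
  show ?case
  proof (cases "k = Suc m")
    case True then show ?thesis by simp
  next
    case False
    then have km: "k \<le> m" using Suc.prems by simp
    have fm: "ptd_map (2 ^ m) n f" using ptd_mono[OF f] km by simp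
    show ?thesis using lift1[OF fm] Suc.IH[OF km] by simp
  qed
qed

end


abbreviation tp :: "nat \<Rightarrow> nat \<Rightarrow> int" where "tp k \<equiv> gpow HZ one_minus_one k"

lemma HZ_ssum:
  assumes f: "ptd_map (2 ^ k) n f" and c: "1 \<le> c" "c \<le> n"
  shows "gact HZ (2 ^ k) n f (tp k) c = ssum (2 ^ k) f c"
proof -
  have "gact HZ (2 ^ k) n f (tp k) c = (\<Sum>i\<in>{i. 1 \<le> i \<and> i \<le> 2 ^ k \<and> f i = c}. tp k i)"
    by (rule HZ_act_at[OF c])
  also have "\<dots> = ssum (2 ^ k) f c" unfolding ssum_def by (rule sum.cong) (auto simp: tpow)
  finally show ?thesis .
qed

definition rep :: "nat \<Rightarrow> (nat \<Rightarrow> int) \<Rightarrow> nat \<Rightarrow> (nat \<Rightarrow> nat) \<Rightarrow> bool" where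
  "rep n a k f \<longleftrightarrow> 1 \<le> k \<and> ptd_map (2 ^ k) n f \<and> gact HZ (2 ^ k) n f (tp k) = a"

lemma ssum_lift:
  assumes f: "ptd_map (2 ^ k) n f" and km: "k \<le> m" and c: "c \<noteq> 0"
  shows "ssum (2 ^ m) f c = ssum (2 ^ k) f c"
proof -
  have le: "(2::nat) ^ k \<le> 2 ^ m" using km by simp
  have "{i. 1 \<le> i \<and> i \<le> 2 ^ m \<and> f i = c} = {i. 1 \<le> i \<and> i \<le> 2 ^ k \<and> f i = c}"
  proof -
    have "f i \<noteq> c" if "i > 2 ^ k" for i using f that c unfolding ptd_map_def by auto
    moreover have hk: "i \<le> 2 ^ m" if "i \<le> 2 ^ k" for i :: nat using le that by linarith
    ultimately show ?thesis by (auto simp: not_le[symmetric] intro: hk)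
  qed
  then show ?thesis unfolding ssum_def by simp
qed

lemma ssum_big:
  assumes f: "ptd_map N n f" and c: "c > n"
  shows "ssum N f c = 0"
proof -
  have E: "{i. 1 \<le> i \<and> i \<le> N \<and> f i = c} = {}" using f c unfolding ptd_map_def by fastforce
  show ?thesis unfolding ssum_def E by simp
qed

lemma rep_ssum:
  assumes "rep n a k f" "1 \<le> c" "c \<le> n"
  shows "ssum (2 ^ k) f c = a c"
proof -
  have p: "ptd_map (2 ^ k) n f" and e: "gact HZ (2 ^ k) n f (tp k) = a" using assms(1) unfolding rep_def by auto
  show ?thesis using HZ_ssum[OF p assms(2,3)] unfolding e by simp
qed

context fdl
begin

lemma wd:
  assumes rf: "rep n a k f" and rg: "rep n a m g"
  shows "gact R (2 ^ k) n f (gpow R r k) = gact R (2 ^ m) n g (gpow R r m)"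
proof -
  define K where "K = max k m"
  have f: "ptd_map (2 ^ k) n f" and g: "ptd_map (2 ^ m) n g" and k1: "1 \<le> k"
    using rf rg unfolding rep_def by auto
  have kK: "k \<le> K" "m \<le> K" unfolding K_def by auto
  have fK: "ptd_map (2 ^ K) n f" using ptd_mono[OF f] kK by simp
  have gK: "ptd_map (2 ^ K) n g" using ptd_mono[OF g] kK by simp
  have ss: "\<forall>c. c \<noteq> 0 \<longrightarrow> ssum (2 ^ K) f c = ssum (2 ^ K) g c"
  proof (intro allI impI)
    fix c :: nat assume c: "c \<noteq> 0"
    show "ssum (2 ^ K) f c = ssum (2 ^ K) g c"
    proof (cases "c \<le> n")
      case True
      then show ?thesis using ssum_lift[OF f kK(1) c] ssum_lift[OF g kK(2) c]
        rep_ssum[OF rf _ True] rep_ssum[OF rg _ True] c by simp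
    next
      case False
      then show ?thesis using ssum_big[OF fK] ssum_big[OF gK] by simp
    qed
  qed
  have "gact R (2 ^ K) n f (gpow R r K) = gact R (2 ^ K) n g (gpow R r K)"
    by (rule wd_level[OF _ fK gK ss]) (use k1 kK in simp)
  then show ?thesis using lift[OF f kK(1)] lift[OF g kK(2)] by simp
qed

end

lemma sg_2k1: "1 \<le> k \<Longrightarrow> sg (2 ^ k + 1) = -1"
  using bitcount_add[of 0 k 1] bitcount_pos[of 1] unfolding sg_def by simp

lemma sg_2k2: "1 \<le> k \<Longrightarrow> sg (2 ^ k + 2) = 1"
proof -
  assume k: "1 \<le> k"
  have "(1::nat) < 2 ^ k" using k by (intro one_less_power) auto
  then have "bitcount (1 + 2 ^ k * 1) = bitcount 1 + bitcount 1" by (rule bitcount_add)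
  then show ?thesis using bitcount_pos[of 1] unfolding sg_def by (simp add: add.commute)
qed

lemma repr_aux:
  "\<forall>a. a \<in> gcar HZ n \<longrightarrow> (\<Sum>c\<in>{1..n}. nat \<bar>a c\<bar>) = s \<longrightarrow>
     (\<exists>k f. 1 \<le> k \<and> ptd_map (2 ^ k) n f \<and> (\<forall>c. 1 \<le> c \<longrightarrow> c \<le> n \<longrightarrow> ssum (2 ^ k) f c = a c))"
proof (induction s)
  case 0
  show ?case
  proof (intro allI impI)
    fix a :: "nat \<Rightarrow> int" assume "a \<in> gcar HZ n" "(\<Sum>c\<in>{1..n}. nat \<bar>a c\<bar>) = 0"
    then have a0: "\<forall>c\<in>{1..n}. a c = 0" by simp
    have "ptd_map (2 ^ 1) n (\<lambda>_. 0)" unfolding ptd_map_def by simp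
    moreover have "ssum (2 ^ 1) (\<lambda>_. 0) c = a c" if "1 \<le> c" "c \<le> n" for c
      using that a0 unfolding ssum_def by simp
    ultimately show "\<exists>k f. 1 \<le> k \<and> ptd_map (2 ^ k) n f \<and> (\<forall>c. 1 \<le> c \<longrightarrow> c \<le> n \<longrightarrow> ssum (2 ^ k) f c = a c)"
      by blast
  qed
next
  case (Suc s)
  show ?case
  proof (intro allI impI)
    fix a :: "nat \<Rightarrow> int" assume a: "a \<in> gcar HZ n" and sa: "(\<Sum>c\<in>{1..n}. nat \<bar>a c\<bar>) = Suc s"
    obtain c0 where c0: "c0 \<in> {1..n}" "a c0 \<noteq> 0"
    proof (rule ccontr)
      assume "\<not> thesis"
      then have "\<forall>c\<in>{1..n}. a c = 0" using that by blast
      then have "(\<Sum>c\<in>{1..n}. nat \<bar>a c\<bar>) = 0" by simp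
      then show False using sa by simp
    qed
    define \<delta> :: int where "\<delta> = (if a c0 > 0 then 1 else -1)"
    define a' where "a' = a(c0 := a c0 - \<delta>)"
    have a'c: "a' \<in> gcar HZ n" using a c0 unfolding a'_def by auto
    have abs: "nat \<bar>a' c0\<bar> + 1 = nat \<bar>a c0\<bar>" using c0(2) unfolding a'_def \<delta>_def by auto
    have "(\<Sum>c\<in>{1..n}. nat \<bar>a c\<bar>) = nat \<bar>a c0\<bar> + (\<Sum>c\<in>{1..n} - {c0}. nat \<bar>a c\<bar>)"
      using c0 by (simp add: sum.remove)
    moreover have "(\<Sum>c\<in>{1..n}. nat \<bar>a' c\<bar>) = nat \<bar>a' c0\<bar> + (\<Sum>c\<in>{1..n} - {c0}. nat \<bar>a' c\<bar>)"
      using c0 by (simp add: sum.remove)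
    moreover have "(\<Sum>c\<in>{1..n} - {c0}. nat \<bar>a' c\<bar>) = (\<Sum>c\<in>{1..n} - {c0}. nat \<bar>a c\<bar>)"
      unfolding a'_def by (rule sum.cong) auto
    ultimately have "(\<Sum>c\<in>{1..n}. nat \<bar>a' c\<bar>) = s" using sa abs by simp
    then obtain k f where kf: "1 \<le> k" "ptd_map (2 ^ k) n f" "\<forall>c. 1 \<le> c \<longrightarrow> c \<le> n \<longrightarrow> ssum (2 ^ k) f c = a' c"
      using Suc.IH[rule_format, OF a'c] by blast
    define i0 where "i0 = (if a c0 > 0 then 2 ^ k + 2 else 2 ^ k + 1 :: nat)"
    have i0: "2 ^ k < i0" "i0 \<le> 2 ^ Suc k" "sg i0 = \<delta>"
    proof -
      have "2 ^ 1 \<le> (2::nat) ^ k" using kf(1) by (intro power_increasing) auto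
      then show "2 ^ k < i0" "i0 \<le> 2 ^ Suc k" unfolding i0_def by auto
      show "sg i0 = \<delta>" unfolding i0_def \<delta>_def using sg_2k1[OF kf(1)] sg_2k2[OF kf(1)] by simp
    qed
    define f' where "f' = f(i0 := c0)"
    have fz: "f x = 0" if "x > 2 ^ k" for x using kf(2) that unfolding ptd_map_def by auto
    have pf': "ptd_map (2 ^ Suc k) n f'"
    proof -
      have "f x \<le> n" for x using kf(2) unfolding ptd_map_def by (cases "x \<le> 2 ^ k") auto
      moreover have "f 0 = 0" using kf(2) unfolding ptd_map_def by auto
      ultimately show ?thesis unfolding ptd_map_def f'_def using i0 c0 fz by auto
    qed
    have ss': "ssum (2 ^ Suc k) f' c = a c" if c: "1 \<le> c" "c \<le> n" for c
    proof -
      let ?A = "{i. 1 \<le> i \<and> i \<le> 2 ^ k \<and> f i = c}"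
      have E: "{i. 1 \<le> i \<and> i \<le> 2 ^ Suc k \<and> f' i = c} = (if c = c0 then insert i0 ?A else ?A)"
      proof -
        have "i \<le> 2 ^ k" if "f i = c" "i \<noteq> i0" for i using fz that c by (metis not_le not_one_le_zero)
        moreover have hk: "i \<le> 2 * 2 ^ k" if "i \<le> 2 ^ k" for i :: nat using that by simp
        ultimately show ?thesis using i0 unfolding f'_def by (auto simp: not_le intro: hk)
      qed
      have N: "i0 \<notin> ?A" using i0 by auto
      have "ssum (2 ^ Suc k) f' c = ssum (2 ^ k) f c + (if c = c0 then sg i0 else 0)"
      proof -
        have S: "sum sg (insert i0 ?A) = sg i0 + sum sg ?A" by (rule sum.insert[OF fin_fib N])
        show ?thesis unfolding ssum_def E using S by (cases "c = c0") simp_all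
      qed
      also have "\<dots> = a c" using kf(3) c i0(3) unfolding a'_def by auto
      finally show ?thesis .
    qed
    show "\<exists>k f. 1 \<le> k \<and> ptd_map (2 ^ k) n f \<and> (\<forall>c. 1 \<le> c \<longrightarrow> c \<le> n \<longrightarrow> ssum (2 ^ k) f c = a c)"
    proof (intro exI[of _ "Suc k"] exI[of _ f'] conjI allI impI)
      show "1 \<le> Suc k" by simp
      show "ptd_map (2 ^ Suc k) n f'" by (rule pf')
      fix c :: nat assume "1 \<le> c" "c \<le> n"
      then show "ssum (2 ^ Suc k) f' c = a c" by (rule ss')
    qed
  qed
qed

lemma repr: "a \<in> gcar HZ n \<Longrightarrow> \<exists>k f. rep n a k f"
proof -
  assume a: "a \<in> gcar HZ n"
  obtain k f where kf: "1 \<le> k" "ptd_map (2 ^ k) n f" "\<forall>c. 1 \<le> c \<longrightarrow> c \<le> n \<longrightarrow> ssum (2 ^ k) f c = a c"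
    using repr_aux[rule_format, OF a refl] by blast
  have "gact HZ (2 ^ k) n f (tp k) = a"
  proof
    fix c
    show "gact HZ (2 ^ k) n f (tp k) c = a c"
    proof (cases "1 \<le> c \<and> c \<le> n")
      case True then show ?thesis using HZ_ssum[OF kf(2)] kf(3) by simp
    next
      case False then show ?thesis using a by (cases "c = 0") auto
    qed
  qed
  then show ?thesis using kf unfolding rep_def by blast
qed


lemma tp_add: "gmul HZ (2 ^ k) (2 ^ m) (tp k) (tp m) = tp (k + m)"
proof
  fix z
  show "gmul HZ (2 ^ k) (2 ^ m) (tp k) (tp m) z = tp (k + m) z"
  proof (cases "1 \<le> z \<and> z \<le> 2 ^ k * 2 ^ m")
    case False then show ?thesis by (auto simp: tpow power_add)
  next
    case True
    define a where "a = (z - 1) mod 2 ^ k"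
    define b where "b = (z - 1) div 2 ^ k"
    have alt: "a < 2 ^ k" unfolding a_def by simp
    have "z - 1 < 2 ^ k * 2 ^ m" using True by linarith
    then have blt: "b < 2 ^ m" unfolding b_def by (simp add: div_less_iff_less_mult mult.commute)
    have zab: "z - 1 = a + 2 ^ k * b" unfolding a_def b_def by simp
    have bc: "bitcount (z - 1) = bitcount a + bitcount b" using zab bitcount_add[OF alt] by simp
    have "gmul HZ (2 ^ k) (2 ^ m) (tp k) (tp m) z = sg (a + 1) * sg (b + 1)"
    proof -
      have "Suc a \<le> 2 ^ k" "Suc b \<le> 2 ^ m" using alt blt by auto
      then show ?thesis using True unfolding a_def b_def by (simp add: tpow)
    qed
    also have "\<dots> = sg z" unfolding sg_def using bc by auto
    finally show ?thesis using True by (simp add: tpow power_add)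
  qed
qed

lemma sum2': "(\<Sum>i\<in>{i::nat. 1 \<le> i \<and> i \<le> 2 \<and> P i}. f i) = (if P 1 then f 1 else 0) + (if P 2 then f 2 else 0)"
  by (rule sum2)

lemma tp1: "tp 1 = one_minus_one"
proof
  fix i
  show "tp 1 i = one_minus_one i"
  proof (cases "i = 1 \<or> i = 2")
    case True then show ?thesis using sg1 sg2 by (auto simp: tpow one_minus_one_def)
  next
    case False
    then have "\<not> (1 \<le> i \<and> i \<le> 2)" by auto
    then show ?thesis using False by (auto simp: tpow one_minus_one_def)
  qed
qed

context dgr
begin

lemma gpow_add: "r \<in> gcar R 2 \<Longrightarrow> gmul R (2 ^ k) (2 ^ m) (gpow R r k) (gpow R r m) = gpow R r (k + m)"
proof (induction m)
  case 0
  then show ?case using dg_unit(2)[OF gpow_car[OF dg_closed 0]] by simp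
next
  case (Suc m)
  have X: "gpow R r k \<in> gcar R (2 ^ k)" "gpow R r m \<in> gcar R (2 ^ m)" using gpow_car[OF dg_closed Suc.prems] by auto
  have "gmul R (2 ^ k) (2 ^ m * 2) (gpow R r k) (gmul R (2 ^ m) 2 (gpow R r m) r)
      = gmul R (2 ^ k * 2 ^ m) 2 (gmul R (2 ^ k) (2 ^ m) (gpow R r k) (gpow R r m)) r"
    using dg_assoc[OF X Suc.prems] by simp
  also have "\<dots> = gmul R (2 ^ (k + m)) 2 (gpow R r (k + m)) r" using Suc.IH[OF Suc.prems] by (simp add: power_add)
  finally show ?case by (simp add: mult.commute)
qed

lemma gpow1: "r \<in> gcar R 2 \<Longrightarrow> gpow R r 1 = r"
  using dg_unit(1) by simp

end

definition Phi :: "'a gring \<Rightarrow> 'a \<Rightarrow> nat \<Rightarrow> (nat \<Rightarrow> int) \<Rightarrow> 'a" where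
  "Phi R r n a = (if a \<in> gcar HZ n then
      (let p = (SOME p. rep n a (fst p) (snd p)) in gact R (2 ^ fst p) n (snd p) (gpow R r (fst p)))
     else undefined)"

context fdl
begin

lemma Phi_rep:
  assumes "rep n a k f"
  shows "Phi R r n a = gact R (2 ^ k) n f (gpow R r k)"
proof -
  have a: "a \<in> gcar HZ n" using assms unfolding rep_def by (auto simp del: HZ_simps)
  let ?p = "SOME p. rep n a (fst p) (snd p)"
  have "rep n a (fst ?p) (snd ?p)" by (rule someI[of _ "(k, f)"]) (simp add: assms)
  then have "gact R (2 ^ fst ?p) n (snd ?p) (gpow R r (fst ?p)) = gact R (2 ^ k) n f (gpow R r k)"
    using wd assms by blast
  then show ?thesis unfolding Phi_def Let_def using a by simp
qed

lemma rep_car: "rep n a k f \<Longrightarrow> a \<in> gcar HZ n"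
  unfolding rep_def by (auto simp del: HZ_simps)

lemma Phi_mult: "mult_map HZ R (Phi R r)"
  unfolding mult_map_def
proof (intro conjI allI impI)
  fix n x assume x: "x \<in> gcar HZ n"
  obtain k f where kf: "rep n x k f" using repr[OF x] by blast
  have "ptd_map (2 ^ k) n f" using kf unfolding rep_def by simp
  then show "Phi R r n x \<in> gcar R n" unfolding Phi_rep[OF kf] by (rule dg_act_car[OF _ X_car])
next
  fix n
  have z2: "ptd_map 2 0 (\<lambda>_. 0)" and zn: "ptd_map 0 n (\<lambda>_. 0)" unfolding ptd_map_def by auto
  have p: "ptd_map (2 ^ 1) n (\<lambda>_. 0)" unfolding ptd_map_def by auto
  have "rep n (gbase HZ n) 1 (\<lambda>_. 0)" unfolding rep_def using p by auto
  then have "Phi R r n (gbase HZ n) = gact R 2 n (\<lambda>_. 0) (gpow R r 1)" using Phi_rep by simp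
  also have "\<dots> = gact R 2 n ((\<lambda>_::nat. 0::nat) \<circ> (\<lambda>_::nat. 0::nat)) (gpow R r 1)" by (simp add: comp_def)
  also have "\<dots> = gact R 0 n (\<lambda>_. 0) (gact R 2 0 (\<lambda>_. 0) (gpow R r 1))"
    using dg_comp[OF z2 zn, of "gpow R r 1"] X_car[of 1] by simp
  also have "gact R 2 0 (\<lambda>_. 0) (gpow R r 1) = gbase R 0"
    using dg_act_car[OF z2, of "gpow R r 1"] X_car[of 1] dg_car0 by auto
  also have "gact R 0 n (\<lambda>_. 0) (gbase R 0) = gbase R n" by (rule dg_base[OF zn])
  finally show "Phi R r n (gbase HZ n) = gbase R n" .
next
  fix n m g x assume g: "ptd_map n m g" and x: "x \<in> gcar HZ n"
  obtain k f where kf: "rep n x k f" using repr[OF x] by blast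
  have f: "ptd_map (2 ^ k) n f" and k: "1 \<le> k" and fx: "gact HZ (2 ^ k) n f (tp k) = x"
    using kf unfolding rep_def by auto
  have "rep m (gact HZ n m g x) k (g \<circ> f)"
    unfolding rep_def using k ptd_comp[OF f g] HZ_comp[OF f g, of "tp k"] fx by (simp del: HZ_simps)
  then have "Phi R r m (gact HZ n m g x) = gact R (2 ^ k) m (g \<circ> f) (gpow R r k)" by (rule Phi_rep)
  also have "\<dots> = gact R n m g (gact R (2 ^ k) n f (gpow R r k))" by (rule dg_comp[OF f g X_car])
  also have "\<dots> = gact R n m g (Phi R r n x)" using Phi_rep[OF kf] by simp
  finally show "Phi R r m (gact HZ n m g x) = gact R n m g (Phi R r n x)" .
next
  have p: "ptd_map (2 ^ 1) 1 (proj 2 2)" using ptd_proj[of 2 2] by simp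
  have "gact HZ 2 1 (proj 2 2) one_minus_one = gone HZ"
    using HZ_fdl unfolding formal_difference_law_def by (elim conjE)
  then have "rep 1 (gone HZ) 1 (proj 2 2)" unfolding rep_def using p tp1 by simp
  then have "Phi R r 1 (gone HZ) = gact R 2 1 (proj 2 2) (gpow R r 1)" using Phi_rep by simp
  also have "\<dots> = gone R" using gpow1[OF r_car] F_p22 by simp
  finally show "Phi R r 1 (gone HZ) = gone R" .
next
  fix n m x y assume x: "x \<in> gcar HZ n" and y: "y \<in> gcar HZ m"
  obtain k f where kf: "rep n x k f" using repr[OF x] by blast
  obtain l g where lg: "rep m y l g" using repr[OF y] by blast
  have f: "ptd_map (2 ^ k) n f" and k: "1 \<le> k" and fx: "gact HZ (2 ^ k) n f (tp k) = x"
    using kf unfolding rep_def by auto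
  have g: "ptd_map (2 ^ l) m g" and gy: "gact HZ (2 ^ l) m g (tp l) = y"
    using lg unfolding rep_def by auto
  let ?s = "smash_map (2 ^ k) n f (2 ^ l) g"
  have ps: "ptd_map (2 ^ (k + l)) (n * m) ?s" using smash_ptd[OF f g] by (simp add: power_add)
  have "gact HZ (2 ^ (k + l)) (n * m) ?s (tp (k + l)) = gmul HZ n m x y"
    using HZ_nat[OF f g, of "tp k" "tp l"] tp_add[of k l] fx gy by (simp add: power_add del: HZ_simps)
  then have "rep (n * m) (gmul HZ n m x y) (k + l) ?s" unfolding rep_def using k ps by simp
  then have "Phi R r (n * m) (gmul HZ n m x y) = gact R (2 ^ (k + l)) (n * m) ?s (gpow R r (k + l))" by (rule Phi_rep)
  also have "\<dots> = gact R (2 ^ k * 2 ^ l) (n * m) ?s (gmul R (2 ^ k) (2 ^ l) (gpow R r k) (gpow R r l))"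
    using gpow_add[OF r_car, of k l] by (simp add: power_add)
  also have "\<dots> = gmul R n m (gact R (2 ^ k) n f (gpow R r k)) (gact R (2 ^ l) m g (gpow R r l))"
    using dg_nat[OF f g X_car X_car] by simp
  also have "\<dots> = gmul R n m (Phi R r n x) (Phi R r m y)" using Phi_rep[OF kf] Phi_rep[OF lg] by simp
  finally show "Phi R r (n * m) (gmul HZ n m x y) = gmul R n m (Phi R r n x) (Phi R r m y)" .
qed

lemma Phi_maps: "Phi R r \<in> mult_maps HZ R"
  unfolding mult_maps_def using Phi_mult by (auto simp: Phi_def simp del: HZ_simps)

lemma Phi_t: "Phi R r 2 one_minus_one = r"
proof -
  have e: "gact HZ 2 2 (idp 2) one_minus_one = one_minus_one"
    by (rule ext) (simp only: HZ_simps sum2, auto simp: idp_def one_minus_one_def)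
  have "rep 2 one_minus_one 1 (idp 2)" unfolding rep_def tp1 using ptd_idp[of 2] e
    by (simp del: HZ_simps gpow.simps)
  then have "Phi R r 2 one_minus_one = gact R 2 2 (idp 2) (gpow R r 1)" using Phi_rep by simp
  then show ?thesis using gpow1[OF r_car] dg_id[OF r_car] by simp
qed

end


lemma t_car: "one_minus_one \<in> gcar HZ 2" by (simp add: one_minus_one_def)

lemma maps_determined:
  assumes R: "discrete_gamma_ring R" and \<phi>: "\<phi> \<in> mult_maps HZ R" and \<psi>: "\<psi> \<in> mult_maps HZ R"
    and eq: "\<phi> 2 one_minus_one = \<psi> 2 one_minus_one"
  shows "\<phi> = \<psi>"
proof -
  have pm: "mult_map HZ R \<phi>" and pu: "\<And>n x. x \<notin> gcar HZ n \<Longrightarrow> \<phi> n x = undefined"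
    using \<phi> unfolding mult_maps_def by auto
  have qm: "mult_map HZ R \<psi>" and qu: "\<And>n x. x \<notin> gcar HZ n \<Longrightarrow> \<psi> n x = undefined"
    using \<psi> unfolding mult_maps_def by auto
  have val: "\<chi> n x = gact R (2 ^ k) n f (gpow R (\<chi> 2 one_minus_one) k)"
    if m: "mult_map HZ R \<chi>" and kf: "rep n x k f" for \<chi> n x k f
  proof -
    have f: "ptd_map (2 ^ k) n f" and fx: "gact HZ (2 ^ k) n f (tp k) = x" using kf unfolding rep_def by auto
    have tc: "tp k \<in> gcar HZ (2 ^ k)" by (rule gpow_car[OF HZ_closed t_car])
    have "\<chi> n x = \<chi> n (gact HZ (2 ^ k) n f (tp k))" using fx by simp
    also have "\<dots> = gact R (2 ^ k) n f (\<chi> (2 ^ k) (tp k))"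
      using m f tc unfolding mult_map_def by blast
    also have "\<chi> (2 ^ k) (tp k) = gpow R (\<chi> 2 one_minus_one) k"
      by (rule gpow_push[OF m HZ_closed t_car])
    finally show ?thesis .
  qed
  show ?thesis
  proof (intro ext)
    fix n x
    show "\<phi> n x = \<psi> n x"
    proof (cases "x \<in> gcar HZ n")
      case True
      obtain k f where kf: "rep n x k f" using repr[OF True] by blast
      show ?thesis using val[OF pm kf] val[OF qm kf] eq by simp
    next
      case False then show ?thesis using pu qu by simp
    qed
  qed
qed

theorem theorem3p8:
  fixes Rs :: "nat \<Rightarrow> 'a gring"
    and sop :: "nat \<Rightarrow> nat \<Rightarrow> (nat \<Rightarrow> nat) \<Rightarrow> nat \<Rightarrow> 'a \<Rightarrow> 'a"
  assumes "simplicial_gamma_ring Rs sop"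
  shows
    "(\<forall>p q \<theta> r. delta_map p q \<theta> \<longrightarrow> formal_difference_law (Rs q) r \<longrightarrow>
        formal_difference_law (Rs p) (sop p q \<theta> 2 r))
   \<and>
     (\<forall>p q \<theta> \<phi>. delta_map p q \<theta> \<longrightarrow> \<phi> \<in> mult_maps HZ (Rs q) \<longrightarrow>
        hz_pull sop p q \<theta> \<phi> \<in> mult_maps HZ (Rs p) \<and>
        hz_pull sop p q \<theta> \<phi> 2 one_minus_one = sop p q \<theta> 2 (\<phi> 2 one_minus_one))
   \<and>
     (\<forall>q. bij_betw (\<lambda>\<phi>. \<phi> 2 one_minus_one) (mult_maps HZ (Rs q))
                    {r. formal_difference_law (Rs q) r})
   \<and>
     (\<forall>(Rs' :: nat \<Rightarrow> 'b gring) sop' g. simplicial_gamma_ring Rs' sop' \<longrightarrow>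
        simplicial_gamma_ring_map Rs sop Rs' sop' g \<longrightarrow>
        (\<forall>q \<phi>. \<phi> \<in> mult_maps HZ (Rs q) \<longrightarrow>
           hz_post (g q) \<phi> \<in> mult_maps HZ (Rs' q) \<and>
           hz_post (g q) \<phi> 2 one_minus_one = g q 2 (\<phi> 2 one_minus_one)) \<and>
        (\<forall>q r. formal_difference_law (Rs q) r \<longrightarrow> formal_difference_law (Rs' q) (g q 2 r)))"
proof -
  have disc: "\<And>q. discrete_gamma_ring (Rs q)" using assms unfolding simplicial_gamma_ring_def by blast
  have sopm: "\<And>p q \<theta>. delta_map p q \<theta> \<Longrightarrow> mult_map (Rs q) (Rs p) (sop p q \<theta>)"
    using assms unfolding simplicial_gamma_ring_def by blast
  have P1: "\<forall>p q \<theta> r. delta_map p q \<theta> \<longrightarrow> formal_difference_law (Rs q) r \<longrightarrow>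
        formal_difference_law (Rs p) (sop p q \<theta> 2 r)"
    using push_fdl[OF sopm disc_closed[OF disc]] by blast
  have P2: "\<forall>p q \<theta> \<phi>. delta_map p q \<theta> \<longrightarrow> \<phi> \<in> mult_maps HZ (Rs q) \<longrightarrow>
        hz_pull sop p q \<theta> \<phi> \<in> mult_maps HZ (Rs p) \<and>
        hz_pull sop p q \<theta> \<phi> 2 one_minus_one = sop p q \<theta> 2 (\<phi> 2 one_minus_one)"
  proof (intro allI impI conjI)
    fix p q \<theta> \<phi> assume d: "delta_map p q \<theta>" and \<phi>: "\<phi> \<in> mult_maps HZ (Rs q)"
    have pm: "mult_map HZ (Rs q) \<phi>" using \<phi> unfolding mult_maps_def by auto
    show "hz_pull sop p q \<theta> \<phi> \<in> mult_maps HZ (Rs p)"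
      unfolding hz_pull_def by (rule post_maps[OF pm sopm[OF d]])
    show "hz_pull sop p q \<theta> \<phi> 2 one_minus_one = sop p q \<theta> 2 (\<phi> 2 one_minus_one)"
      unfolding hz_pull_def using t_car by (simp del: HZ_simps)
  qed
  have P3: "\<forall>q. bij_betw (\<lambda>\<phi>. \<phi> 2 one_minus_one) (mult_maps HZ (Rs q)) {r. formal_difference_law (Rs q) r}"
  proof
    fix q
    interpret dgr "Rs q" by (unfold_locales) (rule disc)
    show "bij_betw (\<lambda>\<phi>. \<phi> 2 one_minus_one) (mult_maps HZ (Rs q)) {r. formal_difference_law (Rs q) r}"
      unfolding bij_betw_def
    proof (intro conjI)
      show "inj_on (\<lambda>\<phi>. \<phi> 2 one_minus_one) (mult_maps HZ (Rs q))"
        using maps_determined[OF disc] unfolding inj_on_def by blast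
      show "(\<lambda>\<phi>. \<phi> 2 one_minus_one) ` mult_maps HZ (Rs q) = {r. formal_difference_law (Rs q) r}"
      proof
        show "(\<lambda>\<phi>. \<phi> 2 one_minus_one) ` mult_maps HZ (Rs q) \<subseteq> {r. formal_difference_law (Rs q) r}"
        proof
          fix r assume "r \<in> (\<lambda>\<phi>. \<phi> 2 one_minus_one) ` mult_maps HZ (Rs q)"
          then obtain \<phi> where \<phi>: "\<phi> \<in> mult_maps HZ (Rs q)" "r = \<phi> 2 one_minus_one" by blast
          have "mult_map HZ (Rs q) \<phi>" using \<phi> unfolding mult_maps_def by auto
          then show "r \<in> {r. formal_difference_law (Rs q) r}"
            using push_fdl[OF _ HZ_closed HZ_fdl] \<phi>(2) by blast
        qed
        show "{r. formal_difference_law (Rs q) r} \<subseteq> (\<lambda>\<phi>. \<phi> 2 one_minus_one) ` mult_maps HZ (Rs q)"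
        proof
          fix r assume "r \<in> {r. formal_difference_law (Rs q) r}"
          then have F: "formal_difference_law (Rs q) r" by simp
          interpret fdl "Rs q" r by (unfold_locales) (rule F)
          show "r \<in> (\<lambda>\<phi>. \<phi> 2 one_minus_one) ` mult_maps HZ (Rs q)"
            using Phi_maps Phi_t by (metis imageI)
        qed
      qed
    qed
  qed
  have P4: "\<forall>(Rs' :: nat \<Rightarrow> 'b gring) sop' g. simplicial_gamma_ring Rs' sop' \<longrightarrow>
        simplicial_gamma_ring_map Rs sop Rs' sop' g \<longrightarrow>
        (\<forall>q \<phi>. \<phi> \<in> mult_maps HZ (Rs q) \<longrightarrow>
           hz_post (g q) \<phi> \<in> mult_maps HZ (Rs' q) \<and>
           hz_post (g q) \<phi> 2 one_minus_one = g q 2 (\<phi> 2 one_minus_one)) \<and>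
        (\<forall>q r. formal_difference_law (Rs q) r \<longrightarrow> formal_difference_law (Rs' q) (g q 2 r))"
  proof (intro allI impI conjI)
    fix Rs' :: "nat \<Rightarrow> 'b gring" and sop' g q \<phi>
    assume sm: "simplicial_gamma_ring_map Rs sop Rs' sop' g" and \<phi>: "\<phi> \<in> mult_maps HZ (Rs q)"
    have gm: "mult_map (Rs q) (Rs' q) (g q)" using sm unfolding simplicial_gamma_ring_map_def by blast
    have pm: "mult_map HZ (Rs q) \<phi>" using \<phi> unfolding mult_maps_def by auto
    show "hz_post (g q) \<phi> \<in> mult_maps HZ (Rs' q)" unfolding hz_post_def by (rule post_maps[OF pm gm])
    show "hz_post (g q) \<phi> 2 one_minus_one = g q 2 (\<phi> 2 one_minus_one)"
      unfolding hz_post_def using t_car by (simp del: HZ_simps)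
  next
    fix Rs' :: "nat \<Rightarrow> 'b gring" and sop' g q r
    assume sm: "simplicial_gamma_ring_map Rs sop Rs' sop' g" and F: "formal_difference_law (Rs q) r"
    have gm: "mult_map (Rs q) (Rs' q) (g q)" using sm unfolding simplicial_gamma_ring_map_def by blast
    show "formal_difference_law (Rs' q) (g q 2 r)" by (rule push_fdl[OF gm disc_closed[OF disc] F])
  qed
  show ?thesis using P1 P2 P3 P4 by blast
qed


end
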